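(* Let $f=p/q$ be a rational function with $p,q$ of degree $l$, positive on the standard simplex $\Delta$ with $\underline f=\min_\Delta f>0$, and assume the denominator Bernstein coefficients of degree $l$ are positive on $\Delta$ and on every subsimplex considered. Let $S$ be a subdivision scheme with shrinking factor $C<1$ and $N$ an integer such that \[ \frac{1}{C^N}>\frac{\sqrt{2\omega'}}{\sqrt{\underline f}}. \] Then $f$ satisfies the local certificate of positivity associated to $S^N(\Delta)$, i.e. for every subsimplex $V$ of $S^N(\Delta)$, $b_\alpha(f,l,V)\ge0$ for all $|\alpha|=l$ and $b_{l\hat e_i}(f,l,V)>0$ for $i=0,\dots,n$.
   Context: For a nondegenerate simplex $V=[v_0,\dots,v_n]\subset\mathbb{R}^n$ with barycentric coordinates $\lambda_0,\dots,\lambda_n$, the Bernstein polynomials of degree $k$ are $B^{(k)}_\alpha=\frac{k!}{\alpha_0!\cdots\alpha_n!}\lambda^\alpha$, $\alpha\in\mathbb{N}^{n+1}$, $|\alpha|=k$; $b_\alpha(p,k,V)$ are the coefficients of $p$ in this basis; $b_\alpha(f,k,V)=b_\alpha(p,k,V)/b_\alpha(q,k,V)$. $\Delta$ is the standard simplex; $\hat e_i$ are unit vectors of $\mathbb{R}^{n+1}$. A subdivision scheme $S$ maps a simplex to a family of simplices whose union is it and whose interiors are disjoint; $S^N(\Delta)$ is the result of $N$ successive steps; $S$ has shrinking factor $0<C<1$ if for every simplex $U$ the largest diameter among the simplices of $S(U)$ is at most $C$ times the diameter of $U$. The constant is $\omega':=l\,\frac{n^2(n+1)(n+2)^2(n+3)}{576\,\min_{|\alpha|=l}b_\alpha(q,l,\Delta)}\big(\|\nabla^2p\|_\infty+\zeta\|\nabla^2q\|_\infty\big)$,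 with $\zeta:=\max\{|\min_{|\alpha|=l}b_\alpha(f,l,\Delta)|,|\max_{|\alpha|=l}b_\alpha(f,l,\Delta)|\}$ and, with convention $\hat e_{-1}:=\hat e_n$, $\|\nabla^2p\|_\infty=\max_{|\gamma|=l-2,0\le i<j\le n}|b_{\gamma+\hat e_i+\hat e_{j-1}}+b_{\gamma+\hat e_{i-1}+\hat e_j}-b_{\gamma+\hat e_{i-1}+\hat e_{j-1}}-b_{\gamma+\hat e_i+\hat e_j}|$ for $b=b(p,l,\Delta)$, likewise for $q$. *)

theory Defs
  imports Complex_Main
begin

text \<open>Points of R^n are represented as functions nat => real whose coordinates
  at indices >= n vanish; coordinate k (0-based) is x k.  A simplex
  [v_0,...,v_n] is a function nat => point, only indices 0..n matter.
  Multi-indices alpha in N^{n+1} are functions nat => nat vanishing above n.\<close>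

type_synonym pt = "nat \<Rightarrow> real"
type_synonym smplx = "nat \<Rightarrow> pt"
type_synonym midx = "nat \<Rightarrow> nat"

definition in_Rn :: "nat \<Rightarrow> pt \<Rightarrow> bool" where
  "in_Rn n x \<longleftrightarrow> (\<forall>k\<ge>n. x k = 0)"

definition dist_n :: "nat \<Rightarrow> pt \<Rightarrow> pt \<Rightarrow> real" where
  "dist_n n x y = sqrt (\<Sum>k<n. (x k - y k)^2)"

definition diam_n :: "nat \<Rightarrow> pt set \<Rightarrow> real" where
  "diam_n n A = Sup {dist_n n x y | x y. x \<in> A \<and> y \<in> A}"

definition nondeg_simplex :: "nat \<Rightarrow> smplx \<Rightarrow> bool" where
  "nondeg_simplex n V \<longleftrightarrow> (\<forall>i\<le>n. in_Rn n (V i)) \<and>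
     (\<forall>c::nat\<Rightarrow>real. (\<Sum>i\<le>n. c i) = 0 \<and> (\<forall>k. (\<Sum>i\<le>n. c i * V i k) = 0)
        \<longrightarrow> (\<forall>i\<le>n. c i = 0))"

definition bary :: "nat \<Rightarrow> smplx \<Rightarrow> pt \<Rightarrow> (nat \<Rightarrow> real)" where
  "bary n V x = (THE lam. (\<forall>i>n. lam i = 0) \<and> (\<Sum>i\<le>n. lam i) = 1 \<and>
                    (\<forall>k. (\<Sum>i\<le>n. lam i * V i k) = x k))"

definition simplex_set :: "nat \<Rightarrow> smplx \<Rightarrow> pt set" where
  "simplex_set n V = {x. \<exists>mu::nat\<Rightarrow>real. (\<forall>i\<le>n. mu i \<ge> 0) \<and> (\<Sum>i\<le>n. mu i) = 1 \<and>
                        x = (\<lambda>k. \<Sum>i\<le>n. mu i * V i k)}"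

definition simplex_interior :: "nat \<Rightarrow> smplx \<Rightarrow> pt set" where
  "simplex_interior n V = {x. in_Rn n x \<and> (\<forall>i\<le>n. bary n V x i > 0)}"

definition diam_simplex :: "nat \<Rightarrow> smplx \<Rightarrow> real" where
  "diam_simplex n V = diam_n n (simplex_set n V)"

definition std_simplex :: "smplx" where
  "std_simplex i = (if i = 0 then (\<lambda>k. 0) else (\<lambda>k. if k = i - 1 then 1 else 0))"

definition multi_idx :: "nat \<Rightarrow> nat \<Rightarrow> midx set" where
  "multi_idx n k = {\<alpha>. (\<forall>i>n. \<alpha> i = 0) \<and> (\<Sum>i\<le>n. \<alpha> i) = k}"

definition bernstein :: "nat \<Rightarrow> nat \<Rightarrow> midx \<Rightarrow> (nat \<Rightarrow> real) \<Rightarrow> real" where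
  "bernstein n k \<alpha> lam = fact k / (\<Prod>i\<le>n. fact (\<alpha> i)) * (\<Prod>i\<le>n. lam i ^ \<alpha> i)"

definition is_poly :: "nat \<Rightarrow> nat \<Rightarrow> (pt \<Rightarrow> real) \<Rightarrow> bool" where
  "is_poly n l p \<longleftrightarrow> (\<exists>c::midx \<Rightarrow> real. \<forall>x. in_Rn n x \<longrightarrow>
     p x = (\<Sum>\<alpha>\<in>{\<alpha>. (\<forall>i\<ge>n. \<alpha> i = 0) \<and> (\<Sum>i<n. \<alpha> i) \<le> l}. c \<alpha> * (\<Prod>i<n. x i ^ \<alpha> i)))"

definition bcoef :: "nat \<Rightarrow> (pt \<Rightarrow> real) \<Rightarrow> nat \<Rightarrow> smplx \<Rightarrow> midx \<Rightarrow> real" where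
  "bcoef n p k V = (THE b. (\<forall>\<alpha>. \<alpha> \<notin> multi_idx n k \<longrightarrow> b \<alpha> = 0) \<and>
      (\<forall>x. in_Rn n x \<longrightarrow> p x = (\<Sum>\<alpha>\<in>multi_idx n k. b \<alpha> * bernstein n k \<alpha> (bary n V x))))"

definition bcoef_rat :: "nat \<Rightarrow> (pt \<Rightarrow> real) \<Rightarrow> (pt \<Rightarrow> real) \<Rightarrow> nat \<Rightarrow> smplx \<Rightarrow> midx \<Rightarrow> real" where
  "bcoef_rat n p q k V \<alpha> = bcoef n p k V \<alpha> / bcoef n q k V \<alpha>"

definition ehat :: "nat \<Rightarrow> midx" where
  "ehat i = (\<lambda>k. if k = i then 1 else 0)"

definition madd3 :: "midx \<Rightarrow> midx \<Rightarrow> midx \<Rightarrow> midx" where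
  "madd3 a b c = (\<lambda>k. a k + b k + c k)"

definition prev_idx :: "nat \<Rightarrow> nat \<Rightarrow> nat" where
  "prev_idx n i = (if i = 0 then n else i - 1)"

text \<open>||nabla^2 p||_infty computed from b = b(p,l,Delta)\<close>
definition hess_norm :: "nat \<Rightarrow> nat \<Rightarrow> (pt \<Rightarrow> real) \<Rightarrow> real" where
  "hess_norm n l p = Max (insert 0
     {\<bar>bcoef n p l std_simplex (madd3 \<gamma> (ehat i) (ehat (prev_idx n j)))
       + bcoef n p l std_simplex (madd3 \<gamma> (ehat (prev_idx n i)) (ehat j))
       - bcoef n p l std_simplex (madd3 \<gamma> (ehat (prev_idx n i)) (ehat (prev_idx n j)))
       - bcoef n p l std_simplex (madd3 \<gamma> (ehat i) (ehat j))\<bar>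
      | \<gamma> i j. \<gamma> \<in> multi_idx n (l - 2) \<and> i < j \<and> j \<le> n})"

definition omega' :: "nat \<Rightarrow> nat \<Rightarrow> (pt \<Rightarrow> real) \<Rightarrow> (pt \<Rightarrow> real) \<Rightarrow> real" where
  "omega' n l p q =
    (let bf = bcoef_rat n p q l std_simplex ` multi_idx n l;
         \<zeta> = max \<bar>Min bf\<bar> \<bar>Max bf\<bar>
     in real l * (real n ^ 2 * real (n + 1) * real (n + 2) ^ 2 * real (n + 3))
        / (576 * Min (bcoef n q l std_simplex ` multi_idx n l))
        * (hess_norm n l p + \<zeta> * hess_norm n l q))"

definition subdivision_scheme :: "nat \<Rightarrow> (smplx \<Rightarrow> smplx set) \<Rightarrow> bool" where
  "subdivision_scheme n S \<longleftrightarrow> (\<forall>U. nondeg_simplex n U \<longrightarrow>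
      (\<forall>W\<in>S U. nondeg_simplex n W) \<and>
      (\<Union>W\<in>S U. simplex_set n W) = simplex_set n U \<and>
      (\<forall>W\<in>S U. \<forall>W'\<in>S U. W \<noteq> W' \<longrightarrow> simplex_interior n W \<inter> simplex_interior n W' = {}))"

definition shrinking_factor :: "nat \<Rightarrow> (smplx \<Rightarrow> smplx set) \<Rightarrow> real \<Rightarrow> bool" where
  "shrinking_factor n S C \<longleftrightarrow> 0 < C \<and> C < 1 \<and>
     (\<forall>U. nondeg_simplex n U \<longrightarrow> (\<forall>W\<in>S U. diam_simplex n W \<le> C * diam_simplex n U))"

fun subdiv_iter :: "(smplx \<Rightarrow> smplx set) \<Rightarrow> nat \<Rightarrow> smplx \<Rightarrow> smplx set" where
  "subdiv_iter S 0 V = {V}"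
| "subdiv_iter S (Suc N) V = (\<Union>W\<in>subdiv_iter S N V. S W)"

end

theory Submission
  imports Defs "Jordan_Normal_Form.Determinant" "HOL-Library.Multiset" "HOL-Library.FuncSet"
    "HOL-Computational_Algebra.Polynomial"
begin

definition addm :: "midx \<Rightarrow> nat \<Rightarrow> midx" where
  "addm \<beta> i = (\<lambda>k. \<beta> k + ehat i k)"

lemma multi_idx_finite: "finite (multi_idx n l)"
proof -
  have "multi_idx n l \<subseteq> (\<lambda>f. \<lambda>i. if i \<le> n then f i else 0) ` (PiE {..n} (\<lambda>_. {..l}))"
  proof
    fix \<beta> assume b: "\<beta> \<in> multi_idx n l"
    hence le: "\<beta> i \<le> l" if "i \<le> n" for i
      using that member_le_sum[of i "{..n}" \<beta>] by (auto simp: multi_idx_def)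
    have "\<beta> = (\<lambda>i. if i \<le> n then restrict \<beta> {..n} i else 0)"
      using b by (auto simp: multi_idx_def fun_eq_iff restrict_def)
    moreover have "restrict \<beta> {..n} \<in> PiE {..n} (\<lambda>_. {..l})" using le by auto
    ultimately show "\<beta> \<in> (\<lambda>f. \<lambda>i. if i \<le> n then f i else 0) ` (PiE {..n} (\<lambda>_. {..l}))"
      by blast
  qed
  thus ?thesis by (rule finite_subset) (auto intro: finite_PiE)
qed

lemma sum_ehat: "i \<le> n \<Longrightarrow> (\<Sum>k\<le>n. ehat i k) = 1"
  by (simp add: ehat_def)

lemma addm_multi_idx: "\<beta> \<in> multi_idx n l \<Longrightarrow> i \<le> n \<Longrightarrow> addm \<beta> i \<in> multi_idx n (Suc l)"
  by (auto simp: multi_idx_def addm_def sum.distrib ehat_def)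

lemma bern_step:
  assumes "i \<le> n"
  shows "w i * bernstein n l \<beta> w = (real (\<beta> i) + 1) / (real l + 1) * bernstein n (Suc l) (addm \<beta> i) w"
proof -
  have f: "(\<Prod>j\<le>n. fact (addm \<beta> i j) :: real) = (real (\<beta> i) + 1) * (\<Prod>j\<le>n. fact (\<beta> j))"
  proof -
    have "(\<Prod>j\<le>n. fact (addm \<beta> i j) :: real) = fact (addm \<beta> i i) * (\<Prod>j\<in>{..n}-{i}. fact (addm \<beta> i j))"
      using assms by (subst prod.remove[of _ i]) auto
    also have "(\<Prod>j\<in>{..n}-{i}. fact (addm \<beta> i j) :: real) = (\<Prod>j\<in>{..n}-{i}. fact (\<beta> j))"
      by (rule prod.cong) (auto simp: addm_def ehat_def)
    also have "fact (addm \<beta> i i) = (real (\<beta> i) + 1) * (fact (\<beta> i) :: real)"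
      by (simp add: addm_def ehat_def)
    also have "(real (\<beta> i) + 1) * fact (\<beta> i) * (\<Prod>j\<in>{..n}-{i}. fact (\<beta> j)) =
        (real (\<beta> i) + 1) * (\<Prod>j\<le>n. fact (\<beta> j) :: real)"
      using assms by (subst (2) prod.remove[of _ i]) auto
    finally show ?thesis .
  qed
  have p: "(\<Prod>j\<le>n. w j ^ addm \<beta> i j) = w i * (\<Prod>j\<le>n. w j ^ \<beta> j)"
  proof -
    have "(\<Prod>j\<le>n. w j ^ addm \<beta> i j) = w i ^ addm \<beta> i i * (\<Prod>j\<in>{..n}-{i}. w j ^ addm \<beta> i j)"
      using assms by (subst prod.remove[of _ i]) auto
    also have "(\<Prod>j\<in>{..n}-{i}. w j ^ addm \<beta> i j) = (\<Prod>j\<in>{..n}-{i}. w j ^ \<beta> j)"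
      by (rule prod.cong) (auto simp: addm_def ehat_def)
    also have "w i ^ addm \<beta> i i = w i ^ Suc (\<beta> i)" by (simp add: addm_def ehat_def)
    finally have "(\<Prod>j\<le>n. w j ^ addm \<beta> i j) = w i ^ Suc (\<beta> i) * (\<Prod>j\<in>{..n}-{i}. w j ^ \<beta> j)" .
    also have "\<dots> = w i * (w i ^ \<beta> i * (\<Prod>j\<in>{..n}-{i}. w j ^ \<beta> j))" by simp
    also have "w i ^ \<beta> i * (\<Prod>j\<in>{..n}-{i}. w j ^ \<beta> j) = (\<Prod>j\<le>n. w j ^ \<beta> j)"
      using assms by (subst (2) prod.remove[of _ i]) auto
    finally show ?thesis .
  qed
  have pos: "(\<Prod>j\<le>n. fact (\<beta> j) :: real) > 0" by (rule prod_pos) auto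
  have fs: "(fact (Suc l) :: real) = (real l + 1) * fact l" by (simp add: algebra_simps)
  have gen: "w * (F / P * Q) = (b + 1) / (L + 1) * ((L + 1) * F / ((b + 1) * P) * (w * Q))"
    if "P > 0" "b \<ge> 0" "L \<ge> 0" for w F P Q b L :: real
  proof -
    have "(b + 1) / (L + 1) * ((L + 1) * F / ((b + 1) * P)) = F / P"
      using that by (simp add: divide_simps)
    then show ?thesis by (metis mult.assoc mult.left_commute)
  qed
  show ?thesis
    unfolding bernstein_def f p fs using pos
    by (rule gen) auto
qed

definition subm :: "midx \<Rightarrow> nat \<Rightarrow> midx" where
  "subm \<beta> i = (\<lambda>k. \<beta> k - ehat i k)"

lemma reindex_addm:
  assumes "i \<le> n"
  shows "(\<Sum>\<beta>\<in>multi_idx n l. h (addm \<beta> i)) = (\<Sum>\<beta>'\<in>{\<beta>'\<in>multi_idx n (Suc l). \<beta>' i > 0}. h \<beta>')"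
proof (rule sum.reindex_bij_witness[where i = "\<lambda>\<beta>'. subm \<beta>' i" and j = "\<lambda>\<beta>. addm \<beta> i"])
  fix \<beta> assume "\<beta> \<in> multi_idx n l"
  thus "subm (addm \<beta> i) i = \<beta>" by (auto simp: subm_def addm_def fun_eq_iff)
  show "addm \<beta> i \<in> {\<beta>' \<in> multi_idx n (Suc l). 0 < \<beta>' i}"
    using \<open>\<beta> \<in> multi_idx n l\<close> assms addm_multi_idx[of \<beta> n l i] by (auto simp: addm_def ehat_def)
next
  fix \<beta>' assume b: "\<beta>' \<in> {\<beta>' \<in> multi_idx n (Suc l). 0 < \<beta>' i}"
  thus "addm (subm \<beta>' i) i = \<beta>'" by (auto simp: subm_def addm_def fun_eq_iff ehat_def)
  have "(\<Sum>k\<le>n. \<beta>' k - ehat i k) = (\<Sum>k\<le>n. \<beta>' k) - (\<Sum>k\<le>n. ehat i k)"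
    using b by (intro sum_subtractf_nat) (auto simp: ehat_def)
  thus "subm \<beta>' i \<in> multi_idx n l" using b assms
    by (auto simp: multi_idx_def subm_def sum_ehat)
qed auto

lemma REC:
  "(\<Sum>i\<le>n. w i * (\<Sum>\<beta>\<in>multi_idx n l. bernstein n l \<beta> w * X (addm \<beta> i))) =
   (\<Sum>\<beta>'\<in>multi_idx n (Suc l). bernstein n (Suc l) \<beta>' w * X \<beta>')"
proof -
  define h where "h i \<beta>' = real (\<beta>' i) / (real l + 1) * bernstein n (Suc l) \<beta>' w * X \<beta>'" for i \<beta>'
  have "(\<Sum>i\<le>n. w i * (\<Sum>\<beta>\<in>multi_idx n l. bernstein n l \<beta> w * X (addm \<beta> i))) =
        (\<Sum>i\<le>n. \<Sum>\<beta>\<in>multi_idx n l. h i (addm \<beta> i))"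
  proof (rule sum.cong[OF refl])
    fix i assume i: "i \<in> {..n}"
    show "w i * (\<Sum>\<beta>\<in>multi_idx n l. bernstein n l \<beta> w * X (addm \<beta> i)) =
          (\<Sum>\<beta>\<in>multi_idx n l. h i (addm \<beta> i))"
      unfolding sum_distrib_left
    proof (rule sum.cong[OF refl])
      fix \<beta> show "w i * (bernstein n l \<beta> w * X (addm \<beta> i)) = h i (addm \<beta> i)"
        using bern_step[of i n w l \<beta>] i
        by (simp add: h_def addm_def ehat_def mult.assoc[symmetric] add.commute)
    qed
  qed
  also have "\<dots> = (\<Sum>i\<le>n. \<Sum>\<beta>'\<in>{\<beta>'\<in>multi_idx n (Suc l). \<beta>' i > 0}. h i \<beta>')"
    by (intro sum.cong refl reindex_addm) auto
  also have "\<dots> = (\<Sum>i\<le>n. \<Sum>\<beta>'\<in>multi_idx n (Suc l). h i \<beta>')"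
    by (intro sum.cong refl sum.mono_neutral_left multi_idx_finite) (auto simp: h_def)
  also have "\<dots> = (\<Sum>\<beta>'\<in>multi_idx n (Suc l). \<Sum>i\<le>n. h i \<beta>')" by (rule sum.swap)
  also have "\<dots> = (\<Sum>\<beta>'\<in>multi_idx n (Suc l). bernstein n (Suc l) \<beta>' w * X \<beta>')"
  proof (rule sum.cong[OF refl])
    fix \<beta>' assume b: "\<beta>' \<in> multi_idx n (Suc l)"
    have "(\<Sum>i\<le>n. h i \<beta>') = (\<Sum>i\<le>n. real (\<beta>' i)) / (real l + 1) * bernstein n (Suc l) \<beta>' w * X \<beta>'"
      unfolding h_def sum_distrib_right sum_divide_distrib by simp
    also have "(\<Sum>i\<le>n. real (\<beta>' i)) = real l + 1"
      using b by (simp add: multi_idx_def flip: of_nat_sum)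
    finally show "(\<Sum>i\<le>n. h i \<beta>') = bernstein n (Suc l) \<beta>' w * X \<beta>'" by simp
  qed
  finally show ?thesis .
qed

definition shiftc :: "(midx \<Rightarrow> real) \<Rightarrow> nat \<Rightarrow> midx \<Rightarrow> real" where
  "shiftc c a = (\<lambda>\<gamma>. c (addm \<gamma> a))"

fun Psi :: "nat \<Rightarrow> (midx \<Rightarrow> real) \<Rightarrow> (nat \<Rightarrow> real) list \<Rightarrow> real" where
  "Psi n c [] = c (\<lambda>_. 0)"
| "Psi n c (\<pi> # \<pi>s) = (\<Sum>a\<le>n. \<pi> a * Psi n (shiftc c a) \<pi>s)"

definition distr :: "nat \<Rightarrow> (nat \<Rightarrow> real) \<Rightarrow> bool" where
  "distr n \<pi> \<longleftrightarrow> (\<forall>a\<le>n. \<pi> a \<ge> 0) \<and> (\<Sum>a\<le>n. \<pi> a) = 1"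

lemma Psi_lin:
  "Psi n (\<lambda>\<gamma>. u * c \<gamma> + v * d \<gamma>) \<pi>s = u * Psi n c \<pi>s + v * Psi n d \<pi>s"
proof (induction \<pi>s arbitrary: c d)
  case Nil thus ?case by simp
next
  case (Cons \<pi> \<pi>s)
  have "Psi n (\<lambda>\<gamma>. u * c \<gamma> + v * d \<gamma>) (\<pi> # \<pi>s) =
        (\<Sum>a\<le>n. \<pi> a * (u * Psi n (shiftc c a) \<pi>s + v * Psi n (shiftc d a) \<pi>s))"
    using Cons.IH[of "shiftc c _" "shiftc d _"] by (simp add: shiftc_def)
  also have "\<dots> = u * Psi n c (\<pi> # \<pi>s) + v * Psi n d (\<pi> # \<pi>s)"
    by (simp add: sum.distrib sum_distrib_left algebra_simps)
  finally show ?case .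
qed

lemma Psi_scale: "Psi n (\<lambda>\<gamma>. u * c \<gamma>) \<pi>s = u * Psi n c \<pi>s"
  using Psi_lin[of n u c 0 c \<pi>s] by simp

lemma Psi_add: "Psi n (\<lambda>\<gamma>. c \<gamma> + d \<gamma>) \<pi>s = Psi n c \<pi>s + Psi n d \<pi>s"
  using Psi_lin[of n 1 c 1 d \<pi>s] by simp

lemma Psi_diff: "Psi n (\<lambda>\<gamma>. c \<gamma> - d \<gamma>) \<pi>s = Psi n c \<pi>s - Psi n d \<pi>s"
  using Psi_lin[of n 1 c "-1" d \<pi>s] by simp

lemma Psi_neg: "Psi n (\<lambda>\<gamma>. - c \<gamma>) \<pi>s = - Psi n c \<pi>s"
  using Psi_scale[of n "-1" c \<pi>s] by simp

lemma zero_multi_idx: "(\<lambda>_. 0) \<in> multi_idx n 0"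
  by (simp add: multi_idx_def)

lemma Psi_mono:
  assumes "\<forall>\<pi>\<in>set \<pi>s. distr n \<pi>"
    and "\<forall>\<gamma>\<in>multi_idx n (length \<pi>s). c \<gamma> \<le> d \<gamma>"
  shows "Psi n c \<pi>s \<le> Psi n d \<pi>s"
  using assms
proof (induction \<pi>s arbitrary: c d)
  case Nil thus ?case using zero_multi_idx by simp
next
  case (Cons \<pi> \<pi>s)
  have "\<pi> a * Psi n (shiftc c a) \<pi>s \<le> \<pi> a * Psi n (shiftc d a) \<pi>s" if a: "a \<le> n" for a
  proof (rule mult_left_mono)
    show "Psi n (shiftc c a) \<pi>s \<le> Psi n (shiftc d a) \<pi>s"
      using Cons.prems a by (intro Cons.IH) (auto simp: shiftc_def addm_multi_idx)
    show "0 \<le> \<pi> a" using Cons.prems a by (auto simp: distr_def)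
  qed
  thus ?case by (auto intro: sum_mono)
qed

lemma Psi_const:
  assumes "\<forall>\<pi>\<in>set \<pi>s. distr n \<pi>"
  shows "Psi n (\<lambda>_. k) \<pi>s = k"
  using assms
proof (induction \<pi>s)
  case Nil thus ?case by simp
next
  case (Cons \<pi> \<pi>s)
  have "Psi n (\<lambda>_. k) (\<pi> # \<pi>s) = (\<Sum>a\<le>n. \<pi> a * k)"
    using Cons by (simp add: shiftc_def)
  also have "\<dots> = k" using Cons.prems by (simp add: distr_def flip: sum_distrib_right)
  finally show ?case .
qed

lemma addm_comm: "addm (addm \<gamma> a) b = addm (addm \<gamma> b) a"
  by (auto simp: addm_def fun_eq_iff)

lemma Psi_swap: "Psi n c (x # y # zs) = Psi n c (y # x # zs)"
proof -
  have "Psi n c (x # y # zs) = (\<Sum>a\<le>n. \<Sum>b\<le>n. x a * y b * Psi n (shiftc (shiftc c a) b) zs)"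
    by (simp add: sum_distrib_left mult.assoc)
  also have "\<dots> = (\<Sum>b\<le>n. \<Sum>a\<le>n. x a * y b * Psi n (shiftc (shiftc c a) b) zs)"
    by (rule sum.swap)
  also have "\<dots> = Psi n c (y # x # zs)"
    by (simp add: sum_distrib_left mult.assoc mult.left_commute shiftc_def addm_comm)
  finally show ?thesis .
qed

lemma Psi_move: "Psi n c (ys1 @ x # ys2) = Psi n c (x # ys1 @ ys2)"
proof (induction ys1 arbitrary: c)
  case Nil thus ?case by simp
next
  case (Cons y ys1)
  have "Psi n c ((y # ys1) @ x # ys2) = (\<Sum>a\<le>n. y a * Psi n (shiftc c a) (x # ys1 @ ys2))"
    using Cons by simp
  also have "\<dots> = Psi n c (y # x # ys1 @ ys2)" by simp
  also have "\<dots> = Psi n c (x # (y # ys1) @ ys2)" using Psi_swap by simp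
  finally show ?case .
qed

lemma Psi_perm: "mset xs = mset ys \<Longrightarrow> Psi n c xs = Psi n c ys"
proof (induction xs arbitrary: c ys)
  case Nil thus ?case by simp
next
  case (Cons x xs)
  have "x \<in> set ys" using Cons.prems by (metis list.set_intros(1) set_mset_mset)
  then obtain ys1 ys2 where ys: "ys = ys1 @ x # ys2" by (meson split_list)
  have m: "mset xs = mset (ys1 @ ys2)" using Cons.prems ys by simp
  have "Psi n c ys = Psi n c (x # ys1 @ ys2)" using ys Psi_move by simp
  also have "\<dots> = Psi n c (x # xs)" using Cons.IH[OF m] by simp
  finally show ?case by simp
qed

lemma bernstein_0: "bernstein n 0 (\<lambda>_. 0) w = 1"
  by (simp add: bernstein_def)

lemma multi_idx_0: "multi_idx n 0 = {\<lambda>_. 0}"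
proof (auto simp: multi_idx_def fun_eq_iff)
  fix x :: midx and k assume "\<forall>i>n. x i = 0" "\<forall>a\<in>{..n}. x a = 0"
  thus "x k = 0" by (cases "k \<le> n") auto
qed

lemma Psi_rep:
  "Psi n c (replicate l w) = (\<Sum>\<beta>\<in>multi_idx n l. c \<beta> * bernstein n l \<beta> w)"
proof (induction l arbitrary: c)
  case 0 thus ?case by (simp add: multi_idx_0 bernstein_0)
next
  case (Suc l)
  have "Psi n c (replicate (Suc l) w) = (\<Sum>a\<le>n. w a * (\<Sum>\<beta>\<in>multi_idx n l. bernstein n l \<beta> w * c (addm \<beta> a)))"
    using Suc by (simp add: shiftc_def mult.commute)
  also have "\<dots> = (\<Sum>\<beta>\<in>multi_idx n (Suc l). c \<beta> * bernstein n (Suc l) \<beta> w)"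
    by (subst REC) (simp add: mult.commute)
  finally show ?case .
qed

definition Lb :: "nat \<Rightarrow> (nat \<Rightarrow> nat \<Rightarrow> real) \<Rightarrow> midx \<Rightarrow> (nat \<Rightarrow> real) list" where
  "Lb n \<mu> \<beta> = concat (map (\<lambda>i. replicate (\<beta> i) (\<mu> i)) [0..<Suc n])"

lemma sum_list_upt_Suc: "sum_list (map f [0..<Suc n]) = (\<Sum>i\<le>n. (f i :: 'a :: comm_monoid_add))"
  unfolding interv_sum_list_conv_sum_set_nat set_upt atLeast0LessThan lessThan_Suc_atMost ..

lemma concat_map_Nil[simp]: "concat (map (\<lambda>i. []) xs) = []"
  by (induction xs) auto

lemma mset_Lb: "mset (Lb n \<mu> \<beta>) = (\<Sum>i\<le>n. replicate_mset (\<beta> i) (\<mu> i))"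
proof -
  have "mset (Lb n \<mu> \<beta>) = sum_list (map (\<lambda>i. replicate_mset (\<beta> i) (\<mu> i)) [0..<Suc n])"
    unfolding Lb_def by (simp add: mset_concat comp_def)
  also have "\<dots> = (\<Sum>i\<le>n. replicate_mset (\<beta> i) (\<mu> i))"
    by (rule sum_list_upt_Suc)
  finally show ?thesis .
qed

lemma mset_Lb_addm:
  assumes "i \<le> n"
  shows "mset (Lb n \<mu> (addm \<beta> i)) = mset (\<mu> i # Lb n \<mu> \<beta>)"
proof -
  have "mset (Lb n \<mu> (addm \<beta> i)) = (\<Sum>j\<le>n. replicate_mset (\<beta> j) (\<mu> j) + (if j = i then {#\<mu> j#} else {#}))"
    unfolding mset_Lb by (rule sum.cong) (auto simp: addm_def ehat_def)
  also have "\<dots> = mset (Lb n \<mu> \<beta>) + {#\<mu> i#}"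
    unfolding sum.distrib mset_Lb using assms by (simp add: sum.delta)
  finally show ?thesis by simp
qed

lemma length_Lb: "length (Lb n \<mu> \<beta>) = (\<Sum>i\<le>n. \<beta> i)"
  unfolding Lb_def length_concat map_map comp_def sum_list_upt_Suc by simp

lemma Psi_head_lin:
  "Psi n c ((\<lambda>a. \<Sum>i\<le>n. w i * \<mu> i a) # xs) = (\<Sum>i\<le>n. w i * Psi n c (\<mu> i # xs))"
proof -
  have "Psi n c ((\<lambda>a. \<Sum>i\<le>n. w i * \<mu> i a) # xs) = (\<Sum>a\<le>n. \<Sum>i\<le>n. w i * (\<mu> i a * Psi n (shiftc c a) xs))"
    by (simp add: sum_distrib_right mult.assoc)
  also have "\<dots> = (\<Sum>i\<le>n. \<Sum>a\<le>n. w i * (\<mu> i a * Psi n (shiftc c a) xs))"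
    by (rule sum.swap)
  also have "\<dots> = (\<Sum>i\<le>n. w i * Psi n c (\<mu> i # xs))"
    by (simp add: sum_distrib_left)
  finally show ?thesis .
qed

lemma Psi_blossom:
  "Psi n c (replicate l (\<lambda>a. \<Sum>i\<le>n. w i * \<mu> i a)) =
   (\<Sum>\<beta>\<in>multi_idx n l. bernstein n l \<beta> w * Psi n c (Lb n \<mu> \<beta>))"
proof (induction l arbitrary: c)
  case 0 thus ?case by (simp add: multi_idx_0 bernstein_0 Lb_def)
next
  case (Suc l)
  let ?r = "\<lambda>a. \<Sum>i\<le>n. w i * \<mu> i a"
  have "Psi n c (replicate (Suc l) ?r) = (\<Sum>a\<le>n. ?r a * (\<Sum>\<beta>\<in>multi_idx n l. bernstein n l \<beta> w * Psi n (shiftc c a) (Lb n \<mu> \<beta>)))"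
    using Suc by simp
  also have "\<dots> = (\<Sum>a\<le>n. \<Sum>\<beta>\<in>multi_idx n l. bernstein n l \<beta> w * (?r a * Psi n (shiftc c a) (Lb n \<mu> \<beta>)))"
    by (simp add: sum_distrib_left mult.left_commute)
  also have "\<dots> = (\<Sum>\<beta>\<in>multi_idx n l. \<Sum>a\<le>n. bernstein n l \<beta> w * (?r a * Psi n (shiftc c a) (Lb n \<mu> \<beta>)))"
    by (rule sum.swap)
  also have "\<dots> = (\<Sum>\<beta>\<in>multi_idx n l. bernstein n l \<beta> w * Psi n c (?r # Lb n \<mu> \<beta>))"
    by (simp only: Psi.simps sum_distrib_left)
  also have "\<dots> = (\<Sum>\<beta>\<in>multi_idx n l. bernstein n l \<beta> w * (\<Sum>i\<le>n. w i * Psi n c (Lb n \<mu> (addm \<beta> i))))"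
  proof (intro sum.cong refl)
    fix \<beta> :: midx
    have "Psi n c (?r # Lb n \<mu> \<beta>) = (\<Sum>i\<le>n. w i * Psi n c (\<mu> i # Lb n \<mu> \<beta>))"
      by (rule Psi_head_lin)
    also have "\<dots> = (\<Sum>i\<le>n. w i * Psi n c (Lb n \<mu> (addm \<beta> i)))"
      by (intro sum.cong refl) (metis Psi_perm mset_Lb_addm atMost_iff)
    finally show "bernstein n l \<beta> w * Psi n c (?r # Lb n \<mu> \<beta>) =
        bernstein n l \<beta> w * (\<Sum>i\<le>n. w i * Psi n c (Lb n \<mu> (addm \<beta> i)))" by simp
  qed
  also have "\<dots> = (\<Sum>\<beta>\<in>multi_idx n l. \<Sum>i\<le>n. w i * (bernstein n l \<beta> w * Psi n c (Lb n \<mu> (addm \<beta> i))))"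
    by (simp add: sum_distrib_left mult.left_commute)
  also have "\<dots> = (\<Sum>i\<le>n. \<Sum>\<beta>\<in>multi_idx n l. w i * (bernstein n l \<beta> w * Psi n c (Lb n \<mu> (addm \<beta> i))))"
    by (rule sum.swap)
  also have "\<dots> = (\<Sum>i\<le>n. w i * (\<Sum>\<beta>\<in>multi_idx n l. bernstein n l \<beta> w * Psi n c (Lb n \<mu> (addm \<beta> i))))"
    by (simp add: sum_distrib_left)
  also have "\<dots> = (\<Sum>\<beta>\<in>multi_idx n (Suc l). bernstein n (Suc l) \<beta> w * Psi n c (Lb n \<mu> \<beta>))"
    by (rule REC)
  finally show ?case .
qed

definition mean :: "(nat \<Rightarrow> real) list \<Rightarrow> nat \<Rightarrow> real" where
  "mean \<pi>s = (\<lambda>a. sum_list (map (\<lambda>\<pi>. \<pi> a) \<pi>s) / real (length \<pi>s))"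

definition qf :: "nat \<Rightarrow> (nat \<Rightarrow> real) \<Rightarrow> real" where
  "qf n d = (\<Sum>a\<in>{1..n}. (d a)^2)"

definition pen :: "nat \<Rightarrow> (nat \<Rightarrow> real) list \<Rightarrow> real" where
  "pen n \<pi>s = sum_list (map (\<lambda>\<pi>. qf n (\<lambda>a. \<pi> a - mean \<pi>s a)) \<pi>s)"

definition cvx :: "nat \<Rightarrow> real \<Rightarrow> (midx \<Rightarrow> real) \<Rightarrow> nat \<Rightarrow> bool" where
  "cvx n K c l \<longleftrightarrow> (\<forall>\<gamma>. (\<forall>i>n. \<gamma> i = 0) \<longrightarrow> (\<Sum>i\<le>n. \<gamma> i) + 2 = l \<longrightarrow>
     (\<forall>d. (\<Sum>a\<le>n. d a) = 0 \<longrightarrow>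
        (\<Sum>a\<le>n. \<Sum>b\<le>n. d a * d b * c (addm (addm \<gamma> a) b)) \<ge> - K * qf n d))"

lemma cvx_shift:
  assumes "cvx n K c (Suc l)" "a \<le> n"
  shows "cvx n K (shiftc c a) l"
  unfolding cvx_def
proof (intro allI impI)
  fix \<gamma> :: midx and d :: "nat \<Rightarrow> real"
  assume g: "\<forall>i>n. \<gamma> i = 0" "(\<Sum>i\<le>n. \<gamma> i) + 2 = l" and d: "(\<Sum>a\<le>n. d a) = 0"
  have g': "\<forall>i>n. addm \<gamma> a i = 0" "(\<Sum>i\<le>n. addm \<gamma> a i) + 2 = Suc l"
    using g assms(2) by (auto simp: addm_def ehat_def sum.distrib)
  have "(\<Sum>a'\<le>n. \<Sum>b\<le>n. d a' * d b * c (addm (addm (addm \<gamma> a) a') b)) \<ge> - K * qf n d"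
    using assms(1) g' d unfolding cvx_def by blast
  moreover have "addm (addm (addm \<gamma> a) a') b = addm (addm (addm \<gamma> a') b) a" for a' b
    by (auto simp: addm_def fun_eq_iff)
  ultimately show "(\<Sum>a'\<le>n. \<Sum>b\<le>n. d a' * d b * shiftc c a (addm (addm \<gamma> a') b)) \<ge> - K * qf n d"
    by (simp add: shiftc_def)
qed

lemma Psi_sum: "finite A \<Longrightarrow> Psi n (\<lambda>\<gamma>. \<Sum>x\<in>A. f x \<gamma>) \<pi>s = (\<Sum>x\<in>A. Psi n (f x) \<pi>s)"
proof (induction A rule: finite_induct)
  case empty
  show ?case using Psi_scale[of n 0 "\<lambda>_. 0" \<pi>s] by simp
next
  case (insert x A)
  thus ?case by (simp add: Psi_add)
qed

lemma Psi_two: "Psi n c (x # y # zs) = (\<Sum>a\<le>n. \<Sum>b\<le>n. x a * y b * Psi n (shiftc (shiftc c a) b) zs)"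
  by (simp add: sum_distrib_left mult.assoc)

lemma sum_sq_split:
  fixes xs :: "real list"
  assumes "xs \<noteq> []"
  shows "sum_list (map (\<lambda>x. (x - z)^2) xs) =
         sum_list (map (\<lambda>x. (x - sum_list xs / length xs)^2) xs) + length xs * (sum_list xs / length xs - z)^2"
proof -
  define r where "r = sum_list xs / length xs"
  have sr: "sum_list xs = length xs * r" using assms by (simp add: r_def)
  have "(\<lambda>x. (x - z)^2) = (\<lambda>x. (x - r)^2 + 2 * (r - z) * x + (z^2 - r^2))"
    by (auto simp: fun_eq_iff power2_eq_square algebra_simps)
  hence "sum_list (map (\<lambda>x. (x - z)^2) xs) =
     sum_list (map (\<lambda>x. (x - r)^2) xs) + 2 * (r - z) * sum_list xs + length xs * (z^2 - r^2)"
    by (simp add: sum_list_addf sum_list_const_mult sum_list_triv)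
  also have "\<dots> = sum_list (map (\<lambda>x. (x - r)^2) xs) + length xs * (r - z)^2"
    unfolding sr by (simp add: power2_eq_square algebra_simps)
  finally show ?thesis by (simp add: r_def)
qed

lemma pw_gen:
  fixes m ta ra tb rb M :: real
  assumes "m \<ge> 0"
  shows "(ta + (m+1) * ra) / (m+2) * (((m+1) * tb + rb) / (m+2)) * M - (m + 1) / (m + 2)^2 * ((ta - ra) * (tb - rb) * M) =
            (ta * rb * M + (m+1) * (ra * tb * M)) / (m+2)"
proof -
  have "m + 2 \<noteq> 0" using assms by simp
  thus ?thesis by (simp add: divide_simps power2_eq_square) (simp add: algebra_simps)
qed

lemma sum2_lin:
  "(\<Sum>a\<in>A. \<Sum>b\<in>B. (f a b + k * g a b) / (d::real)) = ((\<Sum>a\<in>A. \<Sum>b\<in>B. f a b) + k * (\<Sum>a\<in>A. \<Sum>b\<in>B. g a b)) / d"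
  by (simp add: sum.distrib sum_distrib_left add_divide_distrib sum_divide_distrib)

lemma pair_step:
  fixes \<tau> \<rho> :: "nat \<Rightarrow> real"
  assumes dt: "distr n \<tau>" and dr: "distr n \<rho>" and dz: "\<forall>\<pi>\<in>set zs. distr n \<pi>"
    and lz: "length zs = m" and cv: "cvx n K c (m + 2)"
  shows "Psi n c (\<tau> # \<rho> # zs) \<le>
     Psi n c ((\<lambda>a. (\<tau> a + (m+1) * \<rho> a) / (m+2)) # (\<lambda>a. ((m+1) * \<tau> a + \<rho> a) / (m+2)) # zs)
     + K * (m+1) / (m+2)^2 * qf n (\<lambda>a. \<tau> a - \<rho> a)"
proof -
  define M where "M a b = Psi n (shiftc (shiftc c a) b) zs" for a b
  define pb where "pb = (\<lambda>a. (\<tau> a + (m+1) * \<rho> a) / (m+2))"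
  define rp where "rp = (\<lambda>a. ((m+1) * \<tau> a + \<rho> a) / (m+2))"
  define u where "u = (\<lambda>a. \<tau> a - \<rho> a)"
  define cc where "cc = (real m + 1) / (real m + 2)^2"
  have Msym: "M a b = M b a" for a b
    unfolding M_def shiftc_def by (simp add: addm_comm)
  define X where "X = (\<Sum>a\<le>n. \<Sum>b\<le>n. \<tau> a * \<rho> b * M a b)"
  define Y where "Y = (\<Sum>a\<le>n. \<Sum>b\<le>n. pb a * rp b * M a b)"
  define U where "U = (\<Sum>a\<le>n. \<Sum>b\<le>n. u a * u b * M a b)"
  have sym: "(\<Sum>a\<le>n. \<Sum>b\<le>n. \<rho> a * \<tau> b * M a b) = X"
  proof -
    have "(\<Sum>a\<le>n. \<Sum>b\<le>n. \<rho> a * \<tau> b * M a b) = (\<Sum>b\<le>n. \<Sum>a\<le>n. \<rho> a * \<tau> b * M a b)"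
      by (rule sum.swap)
    also have "\<dots> = X" unfolding X_def by (simp add: Msym mult.commute)
    finally show ?thesis .
  qed
  have pw: "pb a * rp b * M a b - cc * (u a * u b * M a b) =
            (\<tau> a * \<rho> b * M a b + (m+1) * (\<rho> a * \<tau> b * M a b)) / (m+2)" for a b
    unfolding pb_def rp_def u_def cc_def using pw_gen[of "real m" "\<tau> a" "\<rho> a" "\<tau> b" "\<rho> b" "M a b"] by (simp add: ac_simps)
  have "Y - cc * U = (\<Sum>a\<le>n. \<Sum>b\<le>n. pb a * rp b * M a b - cc * (u a * u b * M a b))"
    unfolding Y_def U_def by (simp add: sum_distrib_left sum_subtractf)
  also have "\<dots> = (X + (m+1) * X) / (m+2)"
    unfolding pw sum2_lin sym X_def ..
  also have "\<dots> = X" by (simp add: field_simps)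
  finally have XY: "X = Y - cc * U" by simp
  have su: "(\<Sum>a\<le>n. u a) = 0" using dt dr by (simp add: u_def sum_subtractf distr_def)
  have "U = Psi n (\<lambda>\<gamma>. \<Sum>a\<le>n. \<Sum>b\<le>n. u a * u b * c (addm (addm \<gamma> a) b)) zs"
    unfolding U_def M_def by (simp add: Psi_sum Psi_scale shiftc_def addm_comm[of _ a b for a b])
  also have "\<dots> \<ge> Psi n (\<lambda>_. - K * qf n u) zs"
  proof (rule Psi_mono[OF dz], intro ballI)
    fix \<gamma> assume "\<gamma> \<in> multi_idx n (length zs)"
    hence "\<forall>i>n. \<gamma> i = 0" "(\<Sum>i\<le>n. \<gamma> i) + 2 = m + 2" using lz by (auto simp: multi_idx_def)
    thus "- K * qf n u \<le> (\<Sum>a\<le>n. \<Sum>b\<le>n. u a * u b * c (addm (addm \<gamma> a) b))"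
      using cv su unfolding cvx_def by blast
  qed
  also have "Psi n (\<lambda>_. - K * qf n u) zs = - K * qf n u" by (rule Psi_const[OF dz])
  finally have U: "U \<ge> - K * qf n u" .
  have cc0: "cc \<ge> 0" by (simp add: cc_def)
  have "Psi n c (\<tau> # \<rho> # zs) = X" unfolding X_def M_def Psi_two ..
  also have "\<dots> \<le> Y + cc * (K * qf n u)" using XY U cc0 mult_left_mono[OF _ cc0, of "- K * qf n u" U]
    by simp
  also have "Y = Psi n c (pb # rp # zs)" unfolding Y_def M_def Psi_two ..
  finally show ?thesis by (simp add: pb_def rp_def u_def cc_def ac_simps)
qed

lemma head_step:
  assumes "distr n \<tau>" "\<And>a. a \<le> n \<Longrightarrow> Psi n (shiftc c a) xs \<le> Psi n (shiftc c a) ys + E"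
  shows "Psi n c (\<tau> # xs) \<le> Psi n c (\<tau> # ys) + E"
proof -
  have "Psi n c (\<tau> # xs) \<le> (\<Sum>a\<le>n. \<tau> a * (Psi n (shiftc c a) ys + E))"
    unfolding Psi.simps
    by (rule sum_mono, rule mult_left_mono) (use assms in \<open>auto simp: distr_def\<close>)
  also have "\<dots> = Psi n c (\<tau> # ys) + (\<Sum>a\<le>n. \<tau> a) * E"
    by (simp add: algebra_simps sum.distrib sum_distrib_right sum_distrib_left)
  finally show ?thesis using assms(1) by (simp add: distr_def)
qed

lemma sum_list_swap:
  "sum_list (map (\<lambda>x. \<Sum>a\<in>A. f x a) xs) = (\<Sum>a\<in>A. sum_list (map (\<lambda>x. f x a) xs))"
  by (induction xs) (auto simp: sum.distrib)

lemma distr_mean: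
  assumes "xs \<noteq> []" "\<forall>\<pi>\<in>set xs. distr n \<pi>"
  shows "distr n (mean xs)"
proof -
  have "sum_list (map (\<lambda>\<pi>. \<pi> a) xs) \<ge> 0" if "a \<le> n" for a
    using assms that by (intro sum_list_nonneg) (auto simp: distr_def)
  moreover have "(\<Sum>a\<le>n. sum_list (map (\<lambda>\<pi>. \<pi> a) xs)) = sum_list (map (\<lambda>\<pi>. \<Sum>a\<le>n. \<pi> a) xs)"
    by (simp add: sum_list_swap)
  moreover have "sum_list (map (\<lambda>\<pi>. \<Sum>a\<le>n. \<pi> a) xs) = sum_list (map (\<lambda>\<pi>. 1) xs)"
    using assms(2) by (intro arg_cong[where f = sum_list] map_cong) (auto simp: distr_def)
  ultimately show ?thesis using assms(1)
    by (auto simp: distr_def mean_def sum_divide_distrib[symmetric] sum_list_triv)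
qed

lemma distr_comb:
  assumes "distr n x" "distr n y" "s \<ge> 0" "t \<ge> 0" "s + t = 1"
  shows "distr n (\<lambda>a. s * x a + t * y a)"
  using assms by (auto simp: distr_def sum.distrib sum_distrib_left[symmetric])

lemma pen_coord: "pen n xs = (\<Sum>a\<in>{1..n}. sum_list (map (\<lambda>\<pi>. (\<pi> a - mean xs a)^2) xs))"
  unfolding pen_def qf_def by (rule sum_list_swap)

lemma pen_identity:
  fixes m t r :: real
  assumes "m \<ge> 0"
  shows "(t - (t + (m+1) * r) / (m+2))^2 + (m+1) * (r - (t + (m+1) * r) / (m+2))^2 =
         2 * (m+1) / (m+2)^2 * (t - r)^2 + (((m+1) * t + r) / (m+2) - (t + (m+1) * r) / (m+2))^2 +
         m * (r - (t + (m+1) * r) / (m+2))^2"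
proof -
  have "m + 2 \<noteq> 0" using assms by simp
  thus ?thesis by (simp add: divide_simps power2_eq_square) (simp add: algebra_simps)
qed

lemma hoeff:
  "length \<pi>s = l \<Longrightarrow> (\<forall>\<pi>\<in>set \<pi>s. distr n \<pi>) \<Longrightarrow> cvx n K c l \<Longrightarrow>
   Psi n c \<pi>s \<le> Psi n c (replicate l (mean \<pi>s)) + K / 2 * pen n \<pi>s"
proof (induction l arbitrary: c \<pi>s rule: less_induct)
  case (less l)
  show ?case
  proof (cases "l \<le> 1")
    case True
    then consider "\<pi>s = []" | \<pi> where "\<pi>s = [\<pi>]" using less.prems(1)
      by (cases \<pi>s) auto
    then show ?thesis
    proof cases
      case 1 thus ?thesis using less.prems by (simp add: pen_def)
    next
      case 2
      have m1: "mean [\<pi>] = \<pi>" by (simp add: mean_def)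
      have l1: "l = 1" using 2 less.prems(1) by simp
      show ?thesis using 2 m1 l1 by (simp add: pen_def qf_def)
    qed
  next
    case False
    define m where "m = l - 2"
    have lm: "l = m + 2" using False by (simp add: m_def)
    obtain \<tau> \<pi>s' where ps: "\<pi>s = \<tau> # \<pi>s'" using less.prems(1) lm by (cases \<pi>s) auto
    have lp: "length \<pi>s' = m + 1" using ps less.prems(1) lm by simp
    have dt: "distr n \<tau>" and dps: "\<forall>\<pi>\<in>set \<pi>s'. distr n \<pi>" using less.prems(2) ps by auto
    define \<rho> where "\<rho> = mean \<pi>s'"
    define pb where "pb = (\<lambda>a. (\<tau> a + (m+1) * \<rho> a) / (m+2))"
    define rp where "rp = (\<lambda>a. ((m+1) * \<tau> a + \<rho> a) / (m+2))"
    have dr: "distr n \<rho>" unfolding \<rho>_def using dps lp by (intro distr_mean) auto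
    have pb_eq: "pb = (\<lambda>a. (1 / (m+2)) * \<tau> a + ((m+1)/(m+2)) * \<rho> a)"
      by (auto simp: pb_def fun_eq_iff divide_simps)
    have rp_eq: "rp = (\<lambda>a. ((m+1) / (m+2)) * \<tau> a + (1/(m+2)) * \<rho> a)"
      by (auto simp: rp_def fun_eq_iff divide_simps)
    have dpb: "distr n pb" unfolding pb_eq
      by (rule distr_comb[OF dt dr]) (auto simp: field_simps)
    have drp: "distr n rp" unfolding rp_eq
      by (rule distr_comb[OF dt dr]) (auto simp: field_simps)
    have sum_ps': "sum_list (map (\<lambda>\<pi>. \<pi> a) \<pi>s') = (m+1) * \<rho> a" for a
      using lp by (simp add: \<rho>_def mean_def)
    have mean_ps: "mean \<pi>s = pb"
      using lm less.prems(1) by (auto simp: fun_eq_iff ps mean_def pb_def sum_ps' add.commute)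
    have mean_rp: "mean (rp # replicate m \<rho>) = pb"
    proof -
      have "rp a + m * \<rho> a = (m + 1) * pb a" for a
        unfolding rp_def pb_def by (simp add: field_simps)
      thus ?thesis by (auto simp: mean_def fun_eq_iff sum_list_triv sum_list_replicate field_simps)
    qed
    have cvs: "cvx n K (shiftc c a) (m + 1)" if "a \<le> n" for a
      using less.prems(3) lm that cvx_shift[of n K c "m+1" a] by simp
    have s1: "Psi n c \<pi>s \<le> Psi n c (\<tau> # replicate (m+1) \<rho>) + K/2 * pen n \<pi>s'"
      unfolding ps
    proof (rule head_step[OF dt])
      fix a assume "a \<le> n"
      show "Psi n (shiftc c a) \<pi>s' \<le> Psi n (shiftc c a) (replicate (m + 1) \<rho>) + K / 2 * pen n \<pi>s'"
        using less.IH[of "m+1" \<pi>s' "shiftc c a"] lm lp dps cvs[OF \<open>a \<le> n\<close>] by (simp add: \<rho>_def)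
    qed
    have s2: "Psi n c (\<tau> # replicate (m+1) \<rho>) \<le> Psi n c (pb # rp # replicate m \<rho>)
              + K * (m+1) / (m+2)^2 * qf n (\<lambda>a. \<tau> a - \<rho> a)"
      using pair_step[OF dt dr _ _ , of "replicate m \<rho>" m K c] less.prems(3) lm dr
      by (simp add: pb_def rp_def ac_simps)
    have s3: "Psi n c (pb # rp # replicate m \<rho>) \<le> Psi n c (replicate l pb) + K/2 * pen n (rp # replicate m \<rho>)"
    proof -
      have "Psi n c (pb # rp # replicate m \<rho>) \<le> Psi n c (pb # replicate (m+1) pb) + K/2 * pen n (rp # replicate m \<rho>)"
      proof (rule head_step[OF dpb])
        fix a assume "a \<le> n"
        show "Psi n (shiftc c a) (rp # replicate m \<rho>) \<le> Psi n (shiftc c a) (replicate (m+1) pb) + K/2 * pen n (rp # replicate m \<rho>)"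
          using less.IH[of "m+1" "rp # replicate m \<rho>" "shiftc c a"] lm drp dr cvs[OF \<open>a \<le> n\<close>] mean_rp
          by simp
      qed
      thus ?thesis using lm by simp
    qed
    have pen_eq: "pen n \<pi>s' + 2 * ((m+1) / (m+2)^2 * qf n (\<lambda>a. \<tau> a - \<rho> a)) + pen n (rp # replicate m \<rho>) = pen n \<pi>s"
    proof -
      have "pen n \<pi>s = (\<Sum>a\<in>{1..n}. (\<tau> a - pb a)^2 + sum_list (map (\<lambda>\<pi>. (\<pi> a - pb a)^2) \<pi>s'))"
        unfolding pen_coord mean_ps by (simp add: ps)
      also have "\<dots> = (\<Sum>a\<in>{1..n}. (\<tau> a - pb a)^2 + sum_list (map (\<lambda>\<pi>. (\<pi> a - \<rho> a)^2) \<pi>s') + (m+1) * (\<rho> a - pb a)^2)"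
      proof (rule sum.cong[OF refl])
        fix a
        have ne: "map (\<lambda>\<pi>. \<pi> a) \<pi>s' \<noteq> []" using lp by auto
        have "sum_list (map (\<lambda>\<pi>. (\<pi> a - pb a)^2) \<pi>s') = sum_list (map (\<lambda>x. (x - pb a)^2) (map (\<lambda>\<pi>. \<pi> a) \<pi>s'))"
          by (simp add: comp_def)
        also have "\<dots> = sum_list (map (\<lambda>x. (x - \<rho> a)^2) (map (\<lambda>\<pi>. \<pi> a) \<pi>s')) + (m+1) * (\<rho> a - pb a)^2"
          using sum_sq_split[OF ne, of "pb a"] lp by (simp add: \<rho>_def mean_def)
        finally show "(\<tau> a - pb a)^2 + sum_list (map (\<lambda>\<pi>. (\<pi> a - pb a)^2) \<pi>s') =
           (\<tau> a - pb a)^2 + sum_list (map (\<lambda>\<pi>. (\<pi> a - \<rho> a)^2) \<pi>s') + (m+1) * (\<rho> a - pb a)^2"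
          by (simp add: comp_def)
      qed
      also have "\<dots> = (\<Sum>a\<in>{1..n}. sum_list (map (\<lambda>\<pi>. (\<pi> a - \<rho> a)^2) \<pi>s') +
           (2 * ((m+1) / (m+2)^2 * (\<tau> a - \<rho> a)^2) + ((rp a - pb a)^2 + m * (\<rho> a - pb a)^2)))"
      proof (rule sum.cong[OF refl])
        fix a
        show "(\<tau> a - pb a)^2 + sum_list (map (\<lambda>\<pi>. (\<pi> a - \<rho> a)^2) \<pi>s') + (m+1) * (\<rho> a - pb a)^2 =
           sum_list (map (\<lambda>\<pi>. (\<pi> a - \<rho> a)^2) \<pi>s') +
           (2 * ((m+1) / (m+2)^2 * (\<tau> a - \<rho> a)^2) + ((rp a - pb a)^2 + m * (\<rho> a - pb a)^2))"
          using pen_identity[of "real m" "\<tau> a" "\<rho> a"] unfolding pb_def rp_def by (simp add: ac_simps)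
      qed
      also have "\<dots> = pen n \<pi>s' + 2 * ((m+1) / (m+2)^2 * qf n (\<lambda>a. \<tau> a - \<rho> a)) + pen n (rp # replicate m \<rho>)"
        unfolding pen_coord mean_rp
        by (simp add: sum.distrib qf_def sum_distrib_left \<rho>_def sum_list_triv sum_list_replicate)
      finally show ?thesis by simp
    qed
    have "Psi n c \<pi>s \<le> Psi n c (replicate l pb) + K/2 * (pen n \<pi>s' + 2 * ((m+1) / (m+2)^2 * qf n (\<lambda>a. \<tau> a - \<rho> a)) + pen n (rp # replicate m \<rho>))"
      using s1 s2 s3 by (simp add: algebra_simps)
    thus ?thesis unfolding pen_eq mean_ps .
  qed
qed

lemma cs_sum:
  fixes d :: "nat \<Rightarrow> real"
  assumes "finite B"
  shows "(\<Sum>b\<in>B. d b)^2 \<le> real (card B) * (\<Sum>b\<in>B. (d b)^2)"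
proof -
  define S1 where "S1 = (\<Sum>b\<in>B. d b)"
  define S2 where "S2 = (\<Sum>b\<in>B. (d b)^2)"
  have "0 \<le> (\<Sum>a\<in>B. \<Sum>b\<in>B. (d a - d b)^2)" by (intro sum_nonneg) auto
  also have "\<dots> = (\<Sum>a\<in>B. (real (card B) * (d a)^2 + S2 - 2 * d a * S1))"
  proof (rule sum.cong[OF refl])
    fix a
    have "(\<Sum>b\<in>B. (d a - d b)^2) = (\<Sum>b\<in>B. (d a)^2 + (d b)^2 - 2 * d a * d b)"
      by (rule sum.cong) (auto simp: power2_eq_square algebra_simps)
    also have "\<dots> = real (card B) * (d a)^2 + S2 - 2 * d a * S1"
      unfolding S1_def S2_def by (simp add: sum.distrib sum_subtractf sum_distrib_left)
    finally show "(\<Sum>b\<in>B. (d a - d b)^2) = real (card B) * (d a)^2 + S2 - 2 * d a * S1" .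
  qed
  also have "\<dots> = 2 * (real (card B) * S2) - 2 * S1^2"
    unfolding S1_def S2_def by (simp add: sum.distrib sum_subtractf sum_distrib_left sum_distrib_right power2_eq_square algebra_simps)
  finally show ?thesis unfolding S1_def S2_def by simp
qed

definition nx :: "nat \<Rightarrow> nat \<Rightarrow> nat" where
  "nx n a = (if a = n then 0 else Suc a)"

lemma prev_nx: "a \<le> n \<Longrightarrow> prev_idx n (nx n a) = a"
  by (auto simp: prev_idx_def nx_def)

lemma nx_prev: "a \<le> n \<Longrightarrow> nx n (prev_idx n a) = a"
  by (auto simp: prev_idx_def nx_def)

lemma prev_le: "a \<le> n \<Longrightarrow> prev_idx n a \<le> n"
  by (auto simp: prev_idx_def)

lemma nx_le: "a \<le> n \<Longrightarrow> nx n a \<le> n"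
  by (auto simp: nx_def)

lemma sum_prev: "(\<Sum>j\<le>n. f (prev_idx n j)) = (\<Sum>j\<le>n. f j)"
  by (rule sum.reindex_bij_witness[where i = "nx n" and j = "prev_idx n"])
     (auto simp: prev_nx nx_prev prev_le nx_le)

lemma sum_prev': "(\<Sum>j\<le>n. g j * f (prev_idx n j)) = (\<Sum>j\<le>n. g (nx n j) * f j)"
  by (rule sum.reindex_bij_witness[where i = "nx n" and j = "prev_idx n"])
     (auto simp: prev_nx nx_prev prev_le nx_le)

definition xs_of :: "(nat \<Rightarrow> real) \<Rightarrow> nat \<Rightarrow> real" where
  "xs_of d i = - (\<Sum>b<i. d b)"

lemma xs_diff:
  assumes "(\<Sum>a\<le>n. d a) = 0" "a \<le> n"
  shows "xs_of d a - xs_of d (nx n a) = d a"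
proof (cases "a = n")
  case True
  have "(\<Sum>b<n. d b) + d n = 0" using assms(1) by (simp add: lessThan_Suc_atMost[symmetric])
  thus ?thesis using True by (simp add: xs_of_def nx_def)
next
  case False thus ?thesis by (simp add: xs_of_def nx_def)
qed

lemma lemma_S:
  assumes "(\<Sum>a\<le>n. d a) = 0"
  shows "(\<Sum>a\<le>n. d a * f a) = (\<Sum>i\<le>n. xs_of d i * (f i - f (prev_idx n i)))"
proof -
  have "(\<Sum>i\<le>n. xs_of d i * (f i - f (prev_idx n i))) =
        (\<Sum>i\<le>n. xs_of d i * f i) - (\<Sum>i\<le>n. xs_of d i * f (prev_idx n i))"
    by (simp add: algebra_simps sum_subtractf)
  also have "(\<Sum>i\<le>n. xs_of d i * f (prev_idx n i)) = (\<Sum>i\<le>n. xs_of d (nx n i) * f i)"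
    by (rule sum_prev')
  also have "(\<Sum>i\<le>n. xs_of d i * f i) - \<dots> = (\<Sum>i\<le>n. (xs_of d i - xs_of d (nx n i)) * f i)"
    by (simp add: algebra_simps sum_subtractf)
  also have "\<dots> = (\<Sum>a\<le>n. d a * f a)"
    using xs_diff[OF assms] by (intro sum.cong) auto
  finally show ?thesis by simp
qed

lemma xs_sq_bound:
  assumes "(\<Sum>a\<le>n. d a) = 0" "i \<le> n" "j \<le> n"
  shows "(xs_of d i - xs_of d j)^2 \<le> real n * qf n d"
proof -
  have main: "(xs_of d i - xs_of d j)^2 \<le> real n * qf n d" if ij: "i < j" "j \<le> n" for i j
  proof -
    have "xs_of d i - xs_of d j = (\<Sum>b<j. d b) - (\<Sum>b<i. d b)" by (simp add: xs_of_def)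
    also have "\<dots> = (\<Sum>b\<in>{i..<j}. d b)"
    proof -
      have "sum d {0..<j} - sum d {0..<i} = sum d {i..<j}" using ij by (intro sum_diff_nat_ivl) auto
      thus ?thesis by (simp only: atLeast0LessThan)
    qed
    finally have e: "xs_of d i - xs_of d j = (\<Sum>b\<in>{i..<j}. d b)" .
    obtain B where B: "B \<subseteq> {1..n}" "(xs_of d i - xs_of d j)^2 = (\<Sum>b\<in>B. d b)^2"
    proof (cases "i = 0")
      case False
      show ?thesis by (rule that[of "{i..<j}"]) (use e ij False in auto)
    next
      case True
      have u: "sum d ({..<j} \<union> {j..n}) = sum d {..<j} + sum d {j..n}"
        by (rule sum.union_disjoint) auto
      have "{..<j} \<union> {j..n} = {..n}" using ij by auto
      hence "(\<Sum>b<j. d b) + (\<Sum>b\<in>{j..n}. d b) = (\<Sum>b\<le>n. d b)" using u by simp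
      hence "(\<Sum>b\<in>{i..<j}. d b) = - (\<Sum>b\<in>{j..n}. d b)" using True assms(1)
        by (simp add: atLeast0LessThan)
      thus ?thesis by (intro that[of "{j..n}"]) (use e ij True in auto)
    qed
    have fB: "finite B" using B(1) finite_subset by blast
    have "(\<Sum>b\<in>B. d b)^2 \<le> real (card B) * (\<Sum>b\<in>B. (d b)^2)" by (rule cs_sum[OF fB])
    also have "\<dots> \<le> real n * qf n d"
    proof (rule mult_mono)
      show "real (card B) \<le> real n" using card_mono[OF _ B(1)] by simp
      show "(\<Sum>b\<in>B. (d b)^2) \<le> qf n d" unfolding qf_def
        by (rule sum_mono2[OF _ B(1)]) auto
    qed (auto intro: sum_nonneg)
    finally show ?thesis using B(2) by simp
  qed
  consider "i = j" | "i < j" | "j < i" by linarith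
  thus ?thesis
  proof cases
    case 1 thus ?thesis by (simp add: qf_def sum_nonneg)
  next
    case 2 thus ?thesis using main assms by blast
  next
    case 3 thus ?thesis using main[of j i] assms by (simp add: power2_commute)
  qed
qed

lemma qf_nonneg: "qf n d \<ge> 0"
  unfolding qf_def by (rule sum_nonneg) auto

lemma hess_bound:
  fixes M :: "nat \<Rightarrow> nat \<Rightarrow> real"
  assumes sym: "\<And>a b. M a b = M b a"
    and dz: "(\<Sum>a\<le>n. d a) = 0"
    and hb: "\<And>i j. i < j \<Longrightarrow> j \<le> n \<Longrightarrow>
       \<bar>M i (prev_idx n j) + M (prev_idx n i) j - M (prev_idx n i) (prev_idx n j) - M i j\<bar> \<le> H"
  shows "\<bar>\<Sum>a\<le>n. \<Sum>b\<le>n. d a * d b * M a b\<bar> \<le> H * (real n ^ 2 * (real n + 1) / 2) * qf n d"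
proof -
  define pv where "pv = prev_idx n"
  define x where "x = xs_of d"
  define E where "E i j = M i (pv j) + M (pv i) j - M (pv i) (pv j) - M i j" for i j
  define G where "G a = (\<Sum>b\<le>n. d b * M a b)" for a
  define T where "T = (\<Sum>a\<le>n. \<Sum>b\<le>n. d a * d b * M a b)"
  have T1: "T = (\<Sum>a\<le>n. d a * G a)" unfolding T_def G_def by (simp add: sum_distrib_left mult.assoc)
  have G: "G a = (\<Sum>j\<le>n. x j * (M a j - M a (pv j)))" for a
    unfolding G_def x_def pv_def by (rule lemma_S[OF dz])
  have T2: "T = (\<Sum>i\<le>n. x i * (G i - G (pv i)))"
    unfolding T1 x_def pv_def by (rule lemma_S[OF dz])
  have GG: "G i - G (pv i) = - (\<Sum>j\<le>n. x j * E i j)" for i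
    unfolding G E_def by (simp add: sum_subtractf[symmetric] sum_negf[symmetric] algebra_simps)
  have T3: "T = - (\<Sum>i\<le>n. \<Sum>j\<le>n. x i * x j * E i j)"
    unfolding T2 GG by (simp add: sum_distrib_left sum_negf mult.assoc)
  have rowz: "(\<Sum>j\<le>n. E i j) = 0" for i
  proof -
    have "(\<Sum>j\<le>n. M i (pv j)) = (\<Sum>j\<le>n. M i j)" "(\<Sum>j\<le>n. M (pv i) (pv j)) = (\<Sum>j\<le>n. M (pv i) j)"
      unfolding pv_def by (rule sum_prev)+
    thus ?thesis unfolding E_def by (simp add: sum.distrib sum_subtractf)
  qed
  have Esym: "E i j = E j i" for i j unfolding E_def using sym by simp
  have colz: "(\<Sum>i\<le>n. E i j) = 0" for j using rowz[of j] by (simp add: Esym)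
  have "(\<Sum>i\<le>n. \<Sum>j\<le>n. (x i - x j)^2 * E i j) =
        (\<Sum>i\<le>n. \<Sum>j\<le>n. (x i)^2 * E i j) + (\<Sum>i\<le>n. \<Sum>j\<le>n. (x j)^2 * E i j)
        - 2 * (\<Sum>i\<le>n. \<Sum>j\<le>n. x i * x j * E i j)"
    by (simp add: sum.distrib sum_subtractf sum_distrib_left power2_eq_square algebra_simps)
  also have "(\<Sum>i\<le>n. \<Sum>j\<le>n. (x i)^2 * E i j) = 0"
    by (simp add: sum_distrib_left[symmetric] rowz)
  also have "(\<Sum>i\<le>n. \<Sum>j\<le>n. (x j)^2 * E i j) = (\<Sum>j\<le>n. \<Sum>i\<le>n. (x j)^2 * E i j)"
    by (rule sum.swap)
  also have "\<dots> = 0" by (simp add: sum_distrib_left[symmetric] colz)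
  finally have T4: "T = (1/2) * (\<Sum>i\<le>n. \<Sum>j\<le>n. (x i - x j)^2 * E i j)"
    using T3 by simp
  have Eb: "\<bar>E i j\<bar> \<le> H" if "i \<le> n" "j \<le> n" "i \<noteq> j" for i j
  proof (cases "i < j")
    case True thus ?thesis using hb[of i j] that by (simp add: E_def pv_def)
  next
    case False
    hence "j < i" using that by simp
    thus ?thesis using hb[of j i] that Esym[of i j] by (simp add: E_def pv_def)
  qed
  have tb: "\<bar>(x i - x j)^2 * E i j\<bar> \<le> (if i = j then 0 else real n * qf n d * H)"
    if "i \<le> n" "j \<le> n" for i j
  proof (cases "i = j")
    case True thus ?thesis by simp
  next
    case False
    have "\<bar>(x i - x j)^2 * E i j\<bar> = (x i - x j)^2 * \<bar>E i j\<bar>" by (simp add: abs_mult)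
    also have "\<dots> \<le> (real n * qf n d) * H"
      by (rule mult_mono) (use xs_sq_bound[OF dz that] Eb[OF that False] in \<open>auto simp: x_def intro: mult_nonneg_nonneg qf_nonneg\<close>)
    finally show ?thesis using False by simp
  qed
  have "\<bar>T\<bar> \<le> (1/2) * (\<Sum>i\<le>n. \<Sum>j\<le>n. \<bar>(x i - x j)^2 * E i j\<bar>)"
  proof -
    have "\<bar>\<Sum>i\<le>n. \<Sum>j\<le>n. (x i - x j)^2 * E i j\<bar> \<le> (\<Sum>i\<le>n. \<bar>\<Sum>j\<le>n. (x i - x j)^2 * E i j\<bar>)"
      by (rule sum_abs)
    also have "\<dots> \<le> (\<Sum>i\<le>n. \<Sum>j\<le>n. \<bar>(x i - x j)^2 * E i j\<bar>)"
      by (intro sum_mono sum_abs)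
    finally show ?thesis unfolding T4 abs_mult by simp
  qed
  also have "\<dots> \<le> (1/2) * (\<Sum>i\<le>n. \<Sum>j\<le>n. (if i = j then 0 else real n * qf n d * H))"
    using tb by (intro mult_left_mono sum_mono) auto
  also have "(\<Sum>i\<le>n. \<Sum>j\<le>n. (if i = j then 0 else real n * qf n d * H)) = (\<Sum>i\<le>n. real n * (real n * qf n d * H))"
  proof (rule sum.cong[OF refl])
    fix i assume i: "i \<in> {..n}"
    have "(\<Sum>j\<le>n. (if i = j then 0 else real n * qf n d * H)) = (\<Sum>j\<in>{..n}-{i}. real n * qf n d * H)"
      using i by (subst sum.remove[of _ i]) (auto intro: sum.cong)
    also have "\<dots> = real n * (real n * qf n d * H)" using i by simp
    finally show "(\<Sum>j\<le>n. (if i = j then 0 else real n * qf n d * H)) = real n * (real n * qf n d * H)" .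
  qed
  also have "(1/2) * \<dots> = H * (real n ^ 2 * (real n + 1) / 2) * qf n d"
    by (simp add: power2_eq_square algebra_simps)
  finally show ?thesis unfolding T_def .
qed

definition Pset :: "nat \<Rightarrow> nat \<Rightarrow> midx set" where
  "Pset m d = {\<beta>. (\<forall>i\<ge>m. \<beta> i = 0) \<and> (\<Sum>i<m. \<beta> i) \<le> d}"

lemma Pset_finite: "finite (Pset m d)"
proof -
  have "Pset m d \<subseteq> (\<lambda>f. \<lambda>i. if i < m then f i else 0) ` (PiE {..<m} (\<lambda>_. {..d}))"
  proof
    fix \<beta> assume b: "\<beta> \<in> Pset m d"
    hence le: "\<beta> i \<le> d" if "i < m" for i
      using that member_le_sum[of i "{..<m}" \<beta>] by (auto simp: Pset_def)
    have "\<beta> = (\<lambda>i. if i < m then restrict \<beta> {..<m} i else 0)"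
      using b by (auto simp: Pset_def fun_eq_iff)
    moreover have "restrict \<beta> {..<m} \<in> PiE {..<m} (\<lambda>_. {..d})" using le by auto
    ultimately show "\<beta> \<in> (\<lambda>f. \<lambda>i. if i < m then f i else 0) ` (PiE {..<m} (\<lambda>_. {..d}))"
      by blast
  qed
  thus ?thesis by (rule finite_subset) (auto intro: finite_PiE)
qed

lemma Pset_split:
  fixes a :: "midx \<Rightarrow> real" and lam :: "nat \<Rightarrow> real"
  shows "(\<Sum>\<beta>\<in>Pset (Suc m) d. a \<beta> * (\<Prod>i<Suc m. lam i ^ \<beta> i)) =
   (\<Sum>j\<le>d. \<Sum>\<beta>'\<in>Pset m d. (if (\<Sum>i<m. \<beta>' i) + j \<le> d then a (\<beta>'(m := j)) else 0) * (\<Prod>i<m. lam i ^ \<beta>' i) * lam m ^ j)"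
proof -
  define S where "S = {(j, \<beta>'). j \<le> d \<and> \<beta>' \<in> Pset m d \<and> (\<Sum>i<m. \<beta>' i) + j \<le> d}"
  define g where "g = (\<lambda>(j, \<beta>'). a (\<beta>'(m := j)) * (\<Prod>i<m. lam i ^ \<beta>' i) * lam m ^ j)"
  have fin: "finite ({..d} \<times> Pset m d)" using Pset_finite by auto
  have "(\<Sum>j\<le>d. \<Sum>\<beta>'\<in>Pset m d. (if (\<Sum>i<m. \<beta>' i) + j \<le> d then a (\<beta>'(m := j)) else 0) * (\<Prod>i<m. lam i ^ \<beta>' i) * lam m ^ j)
     = (\<Sum>x\<in>{..d} \<times> Pset m d. if (\<Sum>i<m. snd x i) + fst x \<le> d then g x else 0)"
    by (subst sum.cartesian_product) (rule sum.cong, auto simp: g_def)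
  also have "\<dots> = sum g {x\<in>{..d} \<times> Pset m d. (\<Sum>i<m. snd x i) + fst x \<le> d}"
    by (rule sum.inter_filter[OF fin, symmetric])
  also have "{x\<in>{..d} \<times> Pset m d. (\<Sum>i<m. snd x i) + fst x \<le> d} = S"
    by (auto simp: S_def)
  also have "sum g S = (\<Sum>\<beta>\<in>Pset (Suc m) d. a \<beta> * (\<Prod>i<Suc m. lam i ^ \<beta> i))"
  proof (rule sum.reindex_bij_witness[where j = "\<lambda>x. (snd x)(m := fst x)" and i = "\<lambda>\<beta>. (\<beta> m, \<beta>(m := 0))"])
    fix x assume "x \<in> S"
    then obtain j \<beta>' where x: "x = (j, \<beta>')" "j \<le> d" "\<beta>' \<in> Pset m d" "(\<Sum>i<m. \<beta>' i) + j \<le> d"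
      by (auto simp: S_def)
    have b0: "\<beta>' m = 0" using x(3) by (auto simp: Pset_def)
    have sm: "(\<Sum>i<m. (\<beta>'(m := j)) i) = (\<Sum>i<m. \<beta>' i)" by (intro sum.cong) auto
    show "(((snd x)(m := fst x)) m, ((snd x)(m := fst x))(m := 0)) = x"
      using x b0 by (auto simp: fun_eq_iff)
    show "(snd x)(m := fst x) \<in> Pset (Suc m) d"
      using x sm by (auto simp: Pset_def)
    have pr0: "(\<Prod>i<m. lam i ^ (\<beta>'(m := j)) i) = (\<Prod>i<m. lam i ^ \<beta>' i)"
      by (intro prod.cong) auto
    have pr: "(\<Prod>i<Suc m. lam i ^ (\<beta>'(m := j)) i) = (\<Prod>i<m. lam i ^ \<beta>' i) * lam m ^ j"
      using pr0 by simp
    show "a ((snd x)(m := fst x)) * (\<Prod>i<Suc m. lam i ^ ((snd x)(m := fst x)) i) = g x"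
      using x pr by (simp add: g_def mult.assoc)
  next
    fix \<beta> assume b: "\<beta> \<in> Pset (Suc m) d"
    show "(snd (\<beta> m, \<beta>(m := 0)))(m := fst (\<beta> m, \<beta>(m := 0))) = \<beta>" by auto
    have sm: "(\<Sum>i<m. (\<beta>(m := 0)) i) = (\<Sum>i<m. \<beta> i)" by (intro sum.cong) auto
    have "(\<Sum>i<Suc m. \<beta> i) \<le> d" using b by (auto simp: Pset_def)
    thus "(\<beta> m, \<beta>(m := 0)) \<in> S" using b sm by (auto simp: S_def Pset_def)
  qed
  finally show ?thesis by simp
qed

lemma poly_pos_zero:
  fixes C :: "nat \<Rightarrow> real"
  assumes H: "\<forall>t>0. (\<Sum>j\<le>d. C j * t^j) = 0" and j: "j \<le> d"
  shows "C j = 0"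
proof -
  define p where "p = Poly (map C [0..<Suc d])"
  have cp: "coeff p i = (if i \<le> d then C i else 0)" for i
    by (auto simp: p_def nth_default_def simp del: upt_Suc)
  have dp: "degree p \<le> d"
    by (rule degree_le) (auto simp: cp)
  have pp: "poly p t = (\<Sum>j\<le>d. C j * t^j)" for t
  proof -
    have "poly p t = (\<Sum>i\<le>degree p. coeff p i * t ^ i)" by (rule poly_altdef)
    also have "\<dots> = (\<Sum>i\<le>d. coeff p i * t ^ i)"
      by (rule sum.mono_neutral_left) (use dp in \<open>auto simp: coeff_eq_0\<close>)
    also have "\<dots> = (\<Sum>j\<le>d. C j * t^j)" by (intro sum.cong) (auto simp: cp)
    finally show ?thesis .
  qed
  have "p = 0"
  proof (rule ccontr)
    assume "p \<noteq> 0"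
    hence "finite {x. poly p x = 0}" by (rule poly_roots_finite)
    moreover have "{0<..} \<subseteq> {x. poly p x = 0}" using H by (auto simp: pp)
    ultimately have "finite {0::real<..}" by (rule finite_subset[rotated])
    thus False using infinite_Ioi by blast
  qed
  thus ?thesis using cp[of j] j by simp
qed

lemma vanish:
  assumes "\<forall>lam. (\<forall>i<m. lam i > (0::real)) \<longrightarrow> (\<Sum>\<beta>\<in>Pset m d. a \<beta> * (\<Prod>i<m. lam i ^ \<beta> i)) = 0"
    and "\<beta> \<in> Pset m d"
  shows "a \<beta> = 0"
  using assms
proof (induction m arbitrary: a \<beta>)
  case 0
  have "Pset 0 d = {\<lambda>_. 0}" by (auto simp: Pset_def)
  moreover have "\<beta> = (\<lambda>_. 0)" using 0 by (auto simp: Pset_def)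
  ultimately show ?case using 0 by simp
next
  case (Suc m)
  define A where "A j \<beta>' = (if (\<Sum>i<m. \<beta>' i) + j \<le> d then a (\<beta>'(m := j)) else 0)" for j \<beta>'
  have Az: "A j \<beta>' = 0" if j: "j \<le> d" and b': "\<beta>' \<in> Pset m d" for j \<beta>'
  proof -
    have "\<forall>lam. (\<forall>i<m. 0 < lam i) \<longrightarrow> (\<Sum>\<beta>\<in>Pset m d. A j \<beta> * (\<Prod>i<m. lam i ^ \<beta> i)) = 0"
    proof (intro allI impI)
      fix lam :: "nat \<Rightarrow> real" assume pos: "\<forall>i<m. 0 < lam i"
      have "\<forall>t>0. (\<Sum>j\<le>d. (\<Sum>\<beta>\<in>Pset m d. A j \<beta> * (\<Prod>i<m. lam i ^ \<beta> i)) * t ^ j) = 0"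
      proof (intro allI impI)
        fix t :: real assume t: "t > 0"
        have p2: "\<forall>i<Suc m. 0 < (lam(m := t)) i" using pos t by auto
        have "(\<Sum>\<beta>\<in>Pset (Suc m) d. a \<beta> * (\<Prod>i<Suc m. (lam(m := t)) i ^ \<beta> i)) = 0"
          using Suc.prems(1) p2 by blast
        also have "(\<Sum>\<beta>\<in>Pset (Suc m) d. a \<beta> * (\<Prod>i<Suc m. (lam(m := t)) i ^ \<beta> i)) =
           (\<Sum>j\<le>d. \<Sum>\<beta>'\<in>Pset m d. A j \<beta>' * (\<Prod>i<m. (lam(m := t)) i ^ \<beta>' i) * (lam(m := t)) m ^ j)"
          unfolding Pset_split A_def ..
        also have "\<dots> = (\<Sum>j\<le>d. (\<Sum>\<beta>\<in>Pset m d. A j \<beta> * (\<Prod>i<m. lam i ^ \<beta> i)) * t ^ j)"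
          by (simp add: sum_distrib_right)
        finally show "(\<Sum>j\<le>d. (\<Sum>\<beta>\<in>Pset m d. A j \<beta> * (\<Prod>i<m. lam i ^ \<beta> i)) * t ^ j) = 0" .
      qed
      thus "(\<Sum>\<beta>\<in>Pset m d. A j \<beta> * (\<Prod>i<m. lam i ^ \<beta> i)) = 0"
        by (rule poly_pos_zero[OF _ j])
    qed
    thus ?thesis using Suc.IH b' by blast
  qed
  have b: "\<beta> \<in> Pset (Suc m) d" by (rule Suc.prems(2))
  have "\<beta>(m := 0) \<in> Pset m d" "\<beta> m \<le> d" "(\<Sum>i<m. (\<beta>(m := 0)) i) + \<beta> m \<le> d"
  proof -
    have sm: "(\<Sum>i<m. (\<beta>(m := 0)) i) = (\<Sum>i<m. \<beta> i)" by (intro sum.cong) auto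
    have "(\<Sum>i<Suc m. \<beta> i) \<le> d" using b by (auto simp: Pset_def)
    thus "\<beta>(m := 0) \<in> Pset m d" "\<beta> m \<le> d" "(\<Sum>i<m. (\<beta>(m := 0)) i) + \<beta> m \<le> d"
      using b sm by (auto simp: Pset_def)
  qed
  hence "A (\<beta> m) (\<beta>(m := 0)) = a \<beta>" by (simp add: A_def)
  thus ?case using Az[of "\<beta> m" "\<beta>(m := 0)"] \<open>\<beta>(m := 0) \<in> Pset m d\<close> \<open>\<beta> m \<le> d\<close> by simp
qed

definition baryP :: "nat \<Rightarrow> smplx \<Rightarrow> pt \<Rightarrow> (nat \<Rightarrow> real) \<Rightarrow> bool" where
  "baryP n V x lam \<longleftrightarrow> (\<forall>i>n. lam i = 0) \<and> (\<Sum>i\<le>n. lam i) = 1 \<and> (\<forall>k. (\<Sum>i\<le>n. lam i * V i k) = x k)"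

lemma bary_unique:
  assumes nd: "nondeg_simplex n V" and P1: "baryP n V x lam" and P2: "baryP n V x lam'"
  shows "lam = lam'"
proof -
  define c where "c i = lam i - lam' i" for i
  have "(\<Sum>i\<le>n. c i) = 0" using P1 P2 by (simp add: baryP_def c_def sum_subtractf)
  moreover have "\<forall>k. (\<Sum>i\<le>n. c i * V i k) = 0"
    using P1 P2 by (simp add: baryP_def c_def left_diff_distrib sum_subtractf)
  ultimately have "\<forall>i\<le>n. c i = 0" using nd unfolding nondeg_simplex_def by blast
  moreover have "\<forall>i>n. c i = 0" using P1 P2 by (simp add: baryP_def c_def)
  ultimately show ?thesis by (auto simp: fun_eq_iff c_def) (metis eq_iff_diff_eq_0 not_le)
qed

lemma bary_exists:
  assumes nd: "nondeg_simplex n V" and x: "in_Rn n x"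
  shows "\<exists>lam. baryP n V x lam"
proof -
  define A :: "real mat" where "A = mat (Suc n) (Suc n) (\<lambda>(k, i). if k < n then V i k else 1)"
  have Ac: "A \<in> carrier_mat (Suc n) (Suc n)" by (simp add: A_def)
  have Av: "(A *\<^sub>v v) $ k = (\<Sum>i<Suc n. (if k < n then V i k else 1) * v $ i)"
    if "k < Suc n" "dim_vec v = Suc n" for v k
    using that by (simp add: A_def scalar_prod_def atLeast0LessThan)
  have inj: "v = 0\<^sub>v (Suc n)" if v: "v \<in> carrier_vec (Suc n)" "A *\<^sub>v v = 0\<^sub>v (Suc n)" for v
  proof -
    define c where "c i = (if i \<le> n then v $ i else 0)" for i
    have dv: "dim_vec v = Suc n" using v by auto
    have s: "(\<Sum>i\<le>n. c i) = 0"
    proof -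
      have "(A *\<^sub>v v) $ n = 0" using v by simp
      thus ?thesis using Av[of n v] dv by (simp add: c_def lessThan_Suc_atMost)
    qed
    have k: "\<forall>k. (\<Sum>i\<le>n. c i * V i k) = 0"
    proof
      fix k show "(\<Sum>i\<le>n. c i * V i k) = 0"
      proof (cases "k < n")
        case True
        have "(A *\<^sub>v v) $ k = 0" using v True by simp
        thus ?thesis using Av[of k v] dv True by (simp add: c_def lessThan_Suc_atMost mult.commute)
      next
        case False
        have "V i k = 0" if "i \<le> n" for i using nd that False unfolding nondeg_simplex_def in_Rn_def by auto
        thus ?thesis by simp
      qed
    qed
    have "\<forall>i\<le>n. c i = 0" using nd s k unfolding nondeg_simplex_def by blast
    thus ?thesis using dv by (intro eq_vecI) (auto simp: c_def)
  qed
  have "det A \<noteq> 0"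
    using inj det_0_iff_vec_prod_zero_field[OF Ac] by auto
  from det_non_zero_imp_unit[OF Ac this, of "()"]
  obtain B where B: "B \<in> carrier_mat (Suc n) (Suc n)" "A * B = 1\<^sub>m (Suc n)"
    unfolding Units_def by (auto simp: ring_mat_simps)
  define y :: "real vec" where "y = vec (Suc n) (\<lambda>k. if k < n then x k else 1)"
  define v where "v = B *\<^sub>v y"
  have yc: "y \<in> carrier_vec (Suc n)" by (simp add: y_def)
  have Avy: "A *\<^sub>v v = y" unfolding v_def
    using assoc_mult_mat_vec[OF Ac B(1) yc, symmetric] B(2) yc by simp
  have dv: "dim_vec v = Suc n" using B(1) by (simp add: v_def)
  define lam where "lam i = (if i \<le> n then v $ i else 0)" for i
  have "baryP n V x lam"
    unfolding baryP_def
  proof (intro conjI allI impI)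
    show "lam i = 0" if "n < i" for i using that by (simp add: lam_def)
    have "(A *\<^sub>v v) $ n = 1" using Avy by (simp add: y_def)
    thus "(\<Sum>i\<le>n. lam i) = 1" using Av[of n v] dv by (simp add: lam_def lessThan_Suc_atMost)
    fix k show "(\<Sum>i\<le>n. lam i * V i k) = x k"
    proof (cases "k < n")
      case True
      have "(A *\<^sub>v v) $ k = x k" using Avy True by (simp add: y_def)
      thus ?thesis using Av[of k v] dv True by (simp add: lam_def lessThan_Suc_atMost mult.commute)
    next
      case False
      have "V i k = 0" if "i \<le> n" for i using nd that False unfolding nondeg_simplex_def in_Rn_def by auto
      moreover have "x k = 0" using x False by (simp add: in_Rn_def)
      ultimately show ?thesis by simp
    qed
  qed
  thus ?thesis by blast
qed

lemma bary_eq: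
  assumes "nondeg_simplex n V" "baryP n V x lam"
  shows "bary n V x = lam"
  unfolding bary_def
  using assms bary_unique[OF assms(1)] unfolding baryP_def by (intro the_equality) blast+

lemma bary_P:
  assumes "nondeg_simplex n V" "in_Rn n x"
  shows "baryP n V x (bary n V x)"
  using bary_exists[OF assms] bary_eq[OF assms(1)] by metis

definition rep :: "nat \<Rightarrow> nat \<Rightarrow> smplx \<Rightarrow> (pt \<Rightarrow> real) \<Rightarrow> bool" where
  "rep n l V h \<longleftrightarrow> (\<exists>b. (\<forall>\<beta>. \<beta> \<notin> multi_idx n l \<longrightarrow> b \<beta> = 0) \<and>
     (\<forall>x. in_Rn n x \<longrightarrow> h x = (\<Sum>\<beta>\<in>multi_idx n l. b \<beta> * bernstein n l \<beta> (bary n V x))))"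

lemma rep_cong: "rep n l V h \<Longrightarrow> (\<And>x. in_Rn n x \<Longrightarrow> h x = h' x) \<Longrightarrow> rep n l V h'"
  unfolding rep_def by metis

lemma rep_add: "rep n l V h \<Longrightarrow> rep n l V g \<Longrightarrow> rep n l V (\<lambda>x. h x + g x)"
proof -
  assume "rep n l V h" "rep n l V g"
  then obtain b c where b: "\<forall>\<beta>. \<beta> \<notin> multi_idx n l \<longrightarrow> b \<beta> = 0"
      "\<forall>x. in_Rn n x \<longrightarrow> h x = (\<Sum>\<beta>\<in>multi_idx n l. b \<beta> * bernstein n l \<beta> (bary n V x))"
    and c: "\<forall>\<beta>. \<beta> \<notin> multi_idx n l \<longrightarrow> c \<beta> = 0"
      "\<forall>x. in_Rn n x \<longrightarrow> g x = (\<Sum>\<beta>\<in>multi_idx n l. c \<beta> * bernstein n l \<beta> (bary n V x))"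
    unfolding rep_def by blast
  show ?thesis unfolding rep_def
    by (rule exI[of _ "\<lambda>\<beta>. b \<beta> + c \<beta>"]) (use b c in \<open>auto simp: distrib_right sum.distrib\<close>)
qed

lemma rep_scale: "rep n l V h \<Longrightarrow> rep n l V (\<lambda>x. u * h x)"
proof -
  assume "rep n l V h"
  then obtain b where b: "\<forall>\<beta>. \<beta> \<notin> multi_idx n l \<longrightarrow> b \<beta> = 0"
      "\<forall>x. in_Rn n x \<longrightarrow> h x = (\<Sum>\<beta>\<in>multi_idx n l. b \<beta> * bernstein n l \<beta> (bary n V x))"
    unfolding rep_def by blast
  show ?thesis unfolding rep_def
    by (rule exI[of _ "\<lambda>\<beta>. u * b \<beta>"]) (use b in \<open>auto simp: sum_distrib_left mult.assoc\<close>)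
qed

lemma rep_zero: "rep n l V (\<lambda>_. 0)"
  unfolding rep_def by (rule exI[of _ "\<lambda>_. 0"]) auto

lemma rep_sum: "finite A \<Longrightarrow> (\<And>a. a \<in> A \<Longrightarrow> rep n l V (f a)) \<Longrightarrow> rep n l V (\<lambda>x. \<Sum>a\<in>A. f a x)"
proof (induction A rule: finite_induct)
  case empty thus ?case by (simp add: rep_zero)
next
  case (insert a A)
  thus ?case using rep_add[of n l V "f a" "\<lambda>x. \<Sum>a\<in>A. f a x"] by simp
qed

lemma rep_const: "rep n 0 V (\<lambda>_. k)"
  unfolding rep_def
  by (rule exI[of _ "\<lambda>\<beta>. if \<beta> = (\<lambda>_. 0) then k else 0"]) (auto simp: multi_idx_0 bernstein_0)

lemma subm_addm: "subm (addm \<beta> i) i = \<beta>"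
  by (auto simp: subm_def addm_def fun_eq_iff)

lemma rep_mul_bary:
  assumes i: "i \<le> n" and r: "rep n l V h"
  shows "rep n (Suc l) V (\<lambda>x. bary n V x i * h x)"
proof -
  obtain b where b: "\<forall>\<beta>. \<beta> \<notin> multi_idx n l \<longrightarrow> b \<beta> = 0"
      "\<forall>x. in_Rn n x \<longrightarrow> h x = (\<Sum>\<beta>\<in>multi_idx n l. b \<beta> * bernstein n l \<beta> (bary n V x))"
    using r unfolding rep_def by blast
  define b' where "b' \<beta>' = (if \<beta>' \<in> multi_idx n (Suc l) then b (subm \<beta>' i) * real (\<beta>' i) / (real l + 1) else 0)" for \<beta>'
  show ?thesis unfolding rep_def
  proof (rule exI[of _ b'], intro conjI allI impI)
    fix \<beta>' show "\<beta>' \<notin> multi_idx n (Suc l) \<Longrightarrow> b' \<beta>' = 0" by (simp add: b'_def)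
  next
    fix x :: pt assume x: "in_Rn n x"
    let ?w = "bary n V x"
    define H where "H \<beta>' = b' \<beta>' * bernstein n (Suc l) \<beta>' ?w" for \<beta>'
    have "bary n V x i * h x = (\<Sum>\<beta>\<in>multi_idx n l. b \<beta> * (?w i * bernstein n l \<beta> ?w))"
      using b(2) x by (simp add: sum_distrib_left mult.left_commute)
    also have "\<dots> = (\<Sum>\<beta>\<in>multi_idx n l. H (addm \<beta> i))"
    proof (rule sum.cong[OF refl])
      fix \<beta> assume "\<beta> \<in> multi_idx n l"
      hence "addm \<beta> i \<in> multi_idx n (Suc l)" using i by (rule addm_multi_idx)
      thus "b \<beta> * (?w i * bernstein n l \<beta> ?w) = H (addm \<beta> i)"
        unfolding bern_step[OF i] H_def b'_def subm_addm by (simp add: addm_def ehat_def)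
    qed
    also have "\<dots> = (\<Sum>\<beta>'\<in>{\<beta>'\<in>multi_idx n (Suc l). \<beta>' i > 0}. H \<beta>')"
      by (rule reindex_addm[OF i])
    also have "\<dots> = (\<Sum>\<beta>'\<in>multi_idx n (Suc l). H \<beta>')"
      by (rule sum.mono_neutral_left) (auto simp: multi_idx_finite H_def b'_def)
    finally show "bary n V x i * h x = (\<Sum>\<beta>\<in>multi_idx n (Suc l). b' \<beta> * bernstein n (Suc l) \<beta> (bary n V x))"
      by (simp add: H_def)
  qed
qed

lemma rep_elev:
  assumes nd: "nondeg_simplex n V" and r: "rep n l V h"
  shows "rep n (Suc l) V h"
proof -
  have "rep n (Suc l) V (\<lambda>x. \<Sum>i\<le>n. bary n V x i * h x)"
    by (rule rep_sum) (auto intro: rep_mul_bary r)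
  moreover have "(\<Sum>i\<le>n. bary n V x i * h x) = h x" if "in_Rn n x" for x
    using bary_P[OF nd that] by (simp add: baryP_def flip: sum_distrib_right)
  ultimately show ?thesis by (rule rep_cong)
qed

lemma rep_mono:
  assumes nd: "nondeg_simplex n V" and r: "rep n d V h" and le: "d \<le> l"
  shows "rep n l V h"
  using le
proof (induction l)
  case 0 thus ?case using r by simp
next
  case (Suc l)
  show ?case
  proof (cases "d = Suc l")
    case True thus ?thesis using r by simp
  next
    case False thus ?thesis using Suc rep_elev[OF nd] by simp
  qed
qed

lemma rep_mul_coord:
  assumes nd: "nondeg_simplex n V" and r: "rep n l V h"
  shows "rep n (Suc l) V (\<lambda>x. x k * h x)"
proof -
  have "rep n (Suc l) V (\<lambda>x. \<Sum>i\<le>n. V i k * (bary n V x i * h x))"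
  proof (rule rep_sum)
    fix i assume "i \<in> {..n}"
    thus "rep n (Suc l) V (\<lambda>x. V i k * (bary n V x i * h x))"
      by (intro rep_scale[OF rep_mul_bary[OF _ r]]) simp
  qed simp
  moreover have "(\<Sum>i\<le>n. V i k * (bary n V x i * h x)) = x k * h x" if "in_Rn n x" for x
  proof -
    have "(\<Sum>i\<le>n. V i k * (bary n V x i * h x)) = (\<Sum>i\<le>n. bary n V x i * V i k) * h x"
      by (simp add: sum_distrib_left sum_distrib_right mult_ac)
    also have "(\<Sum>i\<le>n. bary n V x i * V i k) = x k"
      using bary_P[OF nd that] unfolding baryP_def by blast
    finally show ?thesis .
  qed
  ultimately show ?thesis by (rule rep_cong)
qed

lemma rep_pow:
  assumes nd: "nondeg_simplex n V" and r: "rep n d V g"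
  shows "rep n (d + e) V (\<lambda>x. g x * x k ^ e)"
proof (induction e)
  case 0 thus ?case using r by simp
next
  case (Suc e)
  have "rep n (Suc (d + e)) V (\<lambda>x. x k * (g x * x k ^ e))" by (rule rep_mul_coord[OF nd Suc])
  thus ?case by (simp add: mult_ac)
qed

lemma rep_mono_monomial:
  assumes nd: "nondeg_simplex n V"
  shows "rep n (\<Sum>i<m. \<alpha> i) V (\<lambda>x. \<Prod>i<m. x i ^ \<alpha> i)"
proof (induction m)
  case 0 thus ?case using rep_const[of n V 1] by simp
next
  case (Suc m)
  have "rep n ((\<Sum>i<m. \<alpha> i) + \<alpha> m) V (\<lambda>x. (\<Prod>i<m. x i ^ \<alpha> i) * x m ^ \<alpha> m)"
    by (rule rep_pow[OF nd Suc])
  thus ?case by simp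
qed

lemma rep_poly:
  assumes nd: "nondeg_simplex n V" and p: "is_poly n l p"
  shows "rep n l V p"
proof -
  obtain c where c: "\<forall>x. in_Rn n x \<longrightarrow>
     p x = (\<Sum>\<alpha>\<in>{\<alpha>. (\<forall>i\<ge>n. \<alpha> i = 0) \<and> (\<Sum>i<n. \<alpha> i) \<le> l}. c \<alpha> * (\<Prod>i<n. x i ^ \<alpha> i))"
    using p unfolding is_poly_def by blast
  have eqP: "{\<alpha>. (\<forall>i\<ge>n. \<alpha> i = 0) \<and> (\<Sum>i<n. \<alpha> i) \<le> l} = Pset n l" by (simp add: Pset_def)
  have "rep n l V (\<lambda>x. \<Sum>\<alpha>\<in>Pset n l. c \<alpha> * (\<Prod>i<n. x i ^ \<alpha> i))"
  proof (rule rep_sum[OF Pset_finite])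
    fix \<alpha> assume a: "\<alpha> \<in> Pset n l"
    show "rep n l V (\<lambda>x. c \<alpha> * (\<Prod>i<n. x i ^ \<alpha> i))"
      by (rule rep_scale, rule rep_mono[OF nd rep_mono_monomial[OF nd]]) (use a in \<open>auto simp: Pset_def\<close>)
  qed
  thus ?thesis by (rule rep_cong) (use c eqP in auto)
qed

lemma bern_unique:
  assumes nd: "nondeg_simplex n V"
    and z: "\<forall>x. in_Rn n x \<longrightarrow> (\<Sum>\<beta>\<in>multi_idx n l. b \<beta> * bernstein n l \<beta> (bary n V x)) = 0"
    and bm: "\<beta> \<in> multi_idx n l"
  shows "b \<beta> = 0"
proof -
  define F where "F \<beta> = fact l / (\<Prod>i\<le>n. fact (\<beta> i) :: real)" for \<beta>
  have Fpos: "F \<beta> > 0" for \<beta> unfolding F_def by (intro divide_pos_pos prod_pos) auto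
  define a where "a \<beta> = (if \<beta> \<in> multi_idx n l then b \<beta> * F \<beta> else 0)" for \<beta>
  have sub: "multi_idx n l \<subseteq> Pset (Suc n) l"
    by (auto simp: multi_idx_def Pset_def lessThan_Suc_atMost)
  have "a \<beta> = 0"
  proof (rule vanish[OF _ subsetD[OF sub bm]], intro allI impI)
    fix lam :: "nat \<Rightarrow> real" assume pos: "\<forall>i<Suc n. 0 < lam i"
    define s where "s = (\<Sum>i\<le>n. lam i)"
    have s0: "s > 0" unfolding s_def using pos by (intro sum_pos) auto
    define mu where "mu i = (if i \<le> n then lam i / s else 0)" for i
    define x where "x = (\<lambda>k. \<Sum>i\<le>n. mu i * V i k)"
    have xR: "in_Rn n x"
      using nd unfolding in_Rn_def x_def nondeg_simplex_def by auto
    have "baryP n V x mu"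
      unfolding baryP_def
    proof (intro conjI allI impI)
      show "mu i = 0" if "n < i" for i using that by (simp add: mu_def)
      have "(\<Sum>i\<le>n. mu i) = (\<Sum>i\<le>n. lam i) / s" by (simp add: mu_def sum_divide_distrib)
      thus "(\<Sum>i\<le>n. mu i) = 1" using s0 by (simp add: s_def)
      show "(\<Sum>i\<le>n. mu i * V i k) = x k" for k by (simp add: x_def)
    qed
    hence bx: "bary n V x = mu" by (rule bary_eq[OF nd])
    have Bmu: "bernstein n l \<beta> mu = F \<beta> * (\<Prod>i\<le>n. lam i ^ \<beta> i) / s ^ l" if "\<beta> \<in> multi_idx n l" for \<beta>
    proof -
      have "(\<Prod>i\<le>n. mu i ^ \<beta> i) = (\<Prod>i\<le>n. lam i ^ \<beta> i / s ^ \<beta> i)"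
        by (intro prod.cong) (auto simp: mu_def power_divide)
      also have "\<dots> = (\<Prod>i\<le>n. lam i ^ \<beta> i) / (\<Prod>i\<le>n. s ^ \<beta> i)"
        by (rule prod_dividef)
      also have "(\<Prod>i\<le>n. s ^ \<beta> i) = s ^ l"
        using that by (simp add: power_sum[symmetric] multi_idx_def)
      finally show ?thesis by (simp add: bernstein_def F_def)
    qed
    have "(\<Sum>\<beta>\<in>Pset (Suc n) l. a \<beta> * (\<Prod>i<Suc n. lam i ^ \<beta> i)) =
          (\<Sum>\<beta>\<in>multi_idx n l. a \<beta> * (\<Prod>i<Suc n. lam i ^ \<beta> i))"
      by (rule sum.mono_neutral_right[OF Pset_finite sub]) (auto simp: a_def)
    also have "\<dots> = s ^ l * (\<Sum>\<beta>\<in>multi_idx n l. b \<beta> * bernstein n l \<beta> mu)"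
      unfolding sum_distrib_left
    proof (rule sum.cong[OF refl])
      fix \<beta> assume "\<beta> \<in> multi_idx n l"
      thus "a \<beta> * (\<Prod>i<Suc n. lam i ^ \<beta> i) = s ^ l * (b \<beta> * bernstein n l \<beta> mu)"
        using s0 by (simp add: Bmu a_def lessThan_Suc_atMost)
    qed
    also have "(\<Sum>\<beta>\<in>multi_idx n l. b \<beta> * bernstein n l \<beta> mu) = 0"
      using z xR bx by metis
    finally show "(\<Sum>\<beta>\<in>Pset (Suc n) l. a \<beta> * (\<Prod>i<Suc n. lam i ^ \<beta> i)) = 0" by simp
  qed
  thus ?thesis using bm Fpos[of \<beta>] by (simp add: a_def)
qed

lemma bcoef_eq:
  assumes nd: "nondeg_simplex n V"
    and b0: "\<forall>\<beta>. \<beta> \<notin> multi_idx n l \<longrightarrow> b \<beta> = 0"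
    and br: "\<forall>x. in_Rn n x \<longrightarrow> h x = (\<Sum>\<beta>\<in>multi_idx n l. b \<beta> * bernstein n l \<beta> (bary n V x))"
  shows "bcoef n h l V = b"
  unfolding bcoef_def
proof (rule the_equality)
  show "(\<forall>\<alpha>. \<alpha> \<notin> multi_idx n l \<longrightarrow> b \<alpha> = 0) \<and>
    (\<forall>x. in_Rn n x \<longrightarrow> h x = (\<Sum>\<alpha>\<in>multi_idx n l. b \<alpha> * bernstein n l \<alpha> (bary n V x)))"
    using b0 br by blast
next
  fix b' assume b': "(\<forall>\<alpha>. \<alpha> \<notin> multi_idx n l \<longrightarrow> b' \<alpha> = 0) \<and>
    (\<forall>x. in_Rn n x \<longrightarrow> h x = (\<Sum>\<alpha>\<in>multi_idx n l. b' \<alpha> * bernstein n l \<alpha> (bary n V x)))"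
  have "\<forall>x. in_Rn n x \<longrightarrow> (\<Sum>\<beta>\<in>multi_idx n l. (b' \<beta> - b \<beta>) * bernstein n l \<beta> (bary n V x)) = 0"
    using b' br by (simp add: left_diff_distrib sum_subtractf)
  hence "b' \<beta> - b \<beta> = 0" if "\<beta> \<in> multi_idx n l" for \<beta>
    using bern_unique[OF nd _ that, of "\<lambda>\<beta>. b' \<beta> - b \<beta>"] by simp
  thus "b' = b" using b' b0 by (auto simp: fun_eq_iff) (metis eq_iff_diff_eq_0)
qed

lemma bcoef_rep:
  assumes nd: "nondeg_simplex n V" and r: "rep n l V h"
  shows "\<forall>\<beta>. \<beta> \<notin> multi_idx n l \<longrightarrow> bcoef n h l V \<beta> = 0"
    and "\<forall>x. in_Rn n x \<longrightarrow> h x = (\<Sum>\<beta>\<in>multi_idx n l. bcoef n h l V \<beta> * bernstein n l \<beta> (bary n V x))"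
proof -
  obtain b where b: "\<forall>\<beta>. \<beta> \<notin> multi_idx n l \<longrightarrow> b \<beta> = 0"
      "\<forall>x. in_Rn n x \<longrightarrow> h x = (\<Sum>\<beta>\<in>multi_idx n l. b \<beta> * bernstein n l \<beta> (bary n V x))"
    using r unfolding rep_def by blast
  have "bcoef n h l V = b" by (rule bcoef_eq[OF nd b])
  thus "\<forall>\<beta>. \<beta> \<notin> multi_idx n l \<longrightarrow> bcoef n h l V \<beta> = 0"
    "\<forall>x. in_Rn n x \<longrightarrow> h x = (\<Sum>\<beta>\<in>multi_idx n l. bcoef n h l V \<beta> * bernstein n l \<beta> (bary n V x))"
    using b by auto
qed

definition stdbary :: "nat \<Rightarrow> pt \<Rightarrow> nat \<Rightarrow> real" where
  "stdbary n x = (\<lambda>i. if i = 0 then 1 - (\<Sum>k<n. x k) else if i \<le> n then x (i - 1) else 0)"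

lemma std_in_Rn: "i \<le> n \<Longrightarrow> in_Rn n (std_simplex i)"
  by (auto simp: in_Rn_def std_simplex_def)

lemma sum_shift1: "(\<Sum>i\<le>n. (f :: nat \<Rightarrow> real) i) = f 0 + (\<Sum>k<n. f (Suc k))"
  by (induction n) (simp_all add: add.assoc)

lemma std_nondeg: "nondeg_simplex n std_simplex"
  unfolding nondeg_simplex_def
proof (intro conjI allI impI)
  show "in_Rn n (std_simplex i)" if "i \<le> n" for i using that by (rule std_in_Rn)
next
  fix c :: "nat \<Rightarrow> real" and i
  assume h: "(\<Sum>i\<le>n. c i) = 0 \<and> (\<forall>k. (\<Sum>i\<le>n. c i * std_simplex i k) = 0)" and i: "i \<le> n"
  have ck: "c (Suc k) = 0" if "k < n" for k
  proof -
    have "(\<Sum>i\<le>n. c i * std_simplex i k) = (\<Sum>i\<le>n. if i = Suc k then c i else 0)"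
      by (intro sum.cong) (auto simp: std_simplex_def)
    also have "\<dots> = c (Suc k)" using that by (simp add: sum.delta)
    finally show ?thesis using h by simp
  qed
  have "(\<Sum>i\<le>n. c i) = c 0 + (\<Sum>k<n. c (Suc k))" by (rule sum_shift1)
  hence c0: "c 0 = 0" using h ck by simp
  show "c i = 0"
  proof (cases i)
    case 0 thus ?thesis using c0 by simp
  next
    case (Suc k) thus ?thesis using ck i by simp
  qed
qed

lemma stdbary_P:
  assumes x: "in_Rn n x"
  shows "baryP n std_simplex x (stdbary n x)"
  unfolding baryP_def
proof (intro conjI allI impI)
  show "stdbary n x i = 0" if "n < i" for i using that by (simp add: stdbary_def)
  have "(\<Sum>i\<le>n. stdbary n x i) = stdbary n x 0 + (\<Sum>k<n. stdbary n x (Suc k))" by (rule sum_shift1)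
  thus "(\<Sum>i\<le>n. stdbary n x i) = 1" by (simp add: stdbary_def)
  fix k
  have "(\<Sum>i\<le>n. stdbary n x i * std_simplex i k) =
        stdbary n x 0 * std_simplex 0 k + (\<Sum>j<n. stdbary n x (Suc j) * std_simplex (Suc j) k)"
    by (rule sum_shift1)
  also have "\<dots> = (\<Sum>j<n. if j = k then x j else 0)"
  proof -
    have "stdbary n x 0 * std_simplex 0 k = 0" by (simp add: std_simplex_def)
    moreover have "stdbary n x (Suc j) * std_simplex (Suc j) k = (if j = k then x j else 0)" if "j < n" for j
      using that by (simp add: stdbary_def std_simplex_def)
    ultimately show ?thesis by simp
  qed
  also have "\<dots> = x k" using x by (auto simp: in_Rn_def sum.delta)
  finally show "(\<Sum>i\<le>n. stdbary n x i * std_simplex i k) = x k" .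
qed

lemma bary_std: "in_Rn n x \<Longrightarrow> bary n std_simplex x = stdbary n x"
  by (rule bary_eq[OF std_nondeg stdbary_P])

lemma bary_comb:
  assumes W: "nondeg_simplex n W" and v: "\<And>i. i \<le> n \<Longrightarrow> in_Rn n (v i)"
    and w: "(\<Sum>i\<le>n. w i) = 1"
  shows "bary n W (\<lambda>k. \<Sum>i\<le>n. w i * v i k) = (\<lambda>a. \<Sum>i\<le>n. w i * bary n W (v i) a)"
proof (rule bary_eq[OF W])
  have P: "baryP n W (v i) (bary n W (v i))" if "i \<le> n" for i by (rule bary_P[OF W v[OF that]])
  show "baryP n W (\<lambda>k. \<Sum>i\<le>n. w i * v i k) (\<lambda>a. \<Sum>i\<le>n. w i * bary n W (v i) a)"
    unfolding baryP_def
  proof (intro conjI allI impI)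
    show "(\<Sum>i\<le>n. w i * bary n W (v i) a) = 0" if "n < a" for a
      using P that by (simp add: baryP_def)
    have "(\<Sum>a\<le>n. \<Sum>i\<le>n. w i * bary n W (v i) a) = (\<Sum>i\<le>n. \<Sum>a\<le>n. w i * bary n W (v i) a)"
      by (rule sum.swap)
    also have "\<dots> = (\<Sum>i\<le>n. w i)"
      using P by (intro sum.cong) (simp_all add: baryP_def flip: sum_distrib_left)
    finally show "(\<Sum>a\<le>n. \<Sum>i\<le>n. w i * bary n W (v i) a) = 1" using w by simp
    fix k
    have "(\<Sum>a\<le>n. (\<Sum>i\<le>n. w i * bary n W (v i) a) * W a k) = (\<Sum>a\<le>n. \<Sum>i\<le>n. w i * (bary n W (v i) a * W a k))"
      by (simp add: sum_distrib_right mult.assoc)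
    also have "\<dots> = (\<Sum>i\<le>n. \<Sum>a\<le>n. w i * (bary n W (v i) a * W a k))" by (rule sum.swap)
    also have "\<dots> = (\<Sum>i\<le>n. w i * v i k)"
      using P by (intro sum.cong) (simp_all add: baryP_def flip: sum_distrib_left)
    finally show "(\<Sum>a\<le>n. (\<Sum>i\<le>n. w i * bary n W (v i) a) * W a k) = (\<Sum>i\<le>n. w i * v i k)" .
  qed
qed

lemma bary_transfer:
  assumes V: "nondeg_simplex n V" and W: "nondeg_simplex n W" and x: "in_Rn n x"
  shows "bary n W x = (\<lambda>a. \<Sum>i\<le>n. bary n V x i * bary n W (V i) a)"
proof -
  have P: "baryP n V x (bary n V x)" by (rule bary_P[OF V x])
  have "x = (\<lambda>k. \<Sum>i\<le>n. bary n V x i * V i k)" using P by (auto simp: baryP_def fun_eq_iff)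
  hence "bary n W x = bary n W (\<lambda>k. \<Sum>i\<le>n. bary n V x i * V i k)" by simp
  also have "\<dots> = (\<lambda>a. \<Sum>i\<le>n. bary n V x i * bary n W (V i) a)"
    by (rule bary_comb[OF W]) (use V P in \<open>auto simp: nondeg_simplex_def baryP_def\<close>)
  finally show ?thesis .
qed

lemma blossom:
  assumes V: "nondeg_simplex n V" and g: "is_poly n l g"
  shows "bcoef n g l V = (\<lambda>\<beta>. if \<beta> \<in> multi_idx n l then
           Psi n (bcoef n g l std_simplex) (Lb n (\<lambda>i. bary n std_simplex (V i)) \<beta>) else 0)"
proof (rule bcoef_eq[OF V])
  show "\<forall>\<beta>. \<beta> \<notin> multi_idx n l \<longrightarrow> (if \<beta> \<in> multi_idx n l then Psi n (bcoef n g l std_simplex) (Lb n (\<lambda>i. bary n std_simplex (V i)) \<beta>) else 0) = 0"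
    by simp
  let ?c = "bcoef n g l std_simplex"
  let ?\<mu> = "\<lambda>i. bary n std_simplex (V i)"
  have cr: "\<forall>x. in_Rn n x \<longrightarrow> g x = (\<Sum>\<beta>\<in>multi_idx n l. ?c \<beta> * bernstein n l \<beta> (bary n std_simplex x))"
    using bcoef_rep(2)[OF std_nondeg rep_poly[OF std_nondeg g]] .
  show "\<forall>x. in_Rn n x \<longrightarrow> g x = (\<Sum>\<beta>\<in>multi_idx n l. (if \<beta> \<in> multi_idx n l then Psi n ?c (Lb n ?\<mu> \<beta>) else 0) * bernstein n l \<beta> (bary n V x))"
  proof (intro allI impI)
    fix x :: pt assume x: "in_Rn n x"
    have "g x = Psi n ?c (replicate l (bary n std_simplex x))"
      using cr x by (simp add: Psi_rep)
    also have "bary n std_simplex x = (\<lambda>a. \<Sum>i\<le>n. bary n V x i * ?\<mu> i a)"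
      by (rule bary_transfer[OF V std_nondeg x])
    also have "Psi n ?c (replicate l (\<lambda>a. \<Sum>i\<le>n. bary n V x i * ?\<mu> i a)) =
       (\<Sum>\<beta>\<in>multi_idx n l. bernstein n l \<beta> (bary n V x) * Psi n ?c (Lb n ?\<mu> \<beta>))"
      by (rule Psi_blossom)
    finally show "g x = (\<Sum>\<beta>\<in>multi_idx n l. (if \<beta> \<in> multi_idx n l then Psi n ?c (Lb n ?\<mu> \<beta>) else 0) * bernstein n l \<beta> (bary n V x))"
      by (simp add: mult.commute)
  qed
qed

lemma simplex_set_props:
  assumes V: "nondeg_simplex n V" and x: "x \<in> simplex_set n V"
  shows "in_Rn n x" "distr n (bary n V x)"
proof -
  obtain mu where mu: "\<forall>i\<le>n. mu i \<ge> 0" "(\<Sum>i\<le>n. mu i) = 1" "x = (\<lambda>k. \<Sum>i\<le>n. mu i * V i k)"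
    using x unfolding simplex_set_def by blast
  show xr: "in_Rn n x" using V mu(3) unfolding nondeg_simplex_def in_Rn_def by auto
  define mu' where "mu' i = (if i \<le> n then mu i else 0)" for i
  have "baryP n V x mu'" unfolding baryP_def using mu by (auto simp: mu'_def)
  hence "bary n V x = mu'" by (rule bary_eq[OF V])
  thus "distr n (bary n V x)" using mu by (auto simp: distr_def mu'_def)
qed

lemma vertex_in_simplex: "i \<le> n \<Longrightarrow> V i \<in> simplex_set n V"
  unfolding simplex_set_def
proof (rule CollectI, rule exI[of _ "\<lambda>j. if j = i then 1 else 0"], intro conjI)
  assume i: "i \<le> n"
  have "(\<Sum>j\<le>n. (if j = i then 1 else 0) * V j k) = V i k" for k
  proof -
    have "(\<Sum>j\<le>n. (if j = i then 1 else 0) * V j k) = (\<Sum>j\<le>n. if j = i then V i k else 0)"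
      by (intro sum.cong) auto
    thus ?thesis using i by simp
  qed
  thus "V i = (\<lambda>k. \<Sum>j\<le>n. (if j = i then 1 else 0) * V j k)" by auto
  show "(\<Sum>j\<le>n. if j = i then 1 else 0 :: real) = 1" using i by simp
qed auto

lemma set_Lb: "set (Lb n \<mu> \<beta>) \<subseteq> \<mu> ` {..n}"
  by (auto simp: Lb_def)

lemma sum_list_concat': "sum_list (concat xss) = sum_list (map sum_list xss)"
  by (induction xss) auto

lemma sum_list_Lb: "sum_list (map f (Lb n \<mu> \<beta>)) = (\<Sum>i\<le>n. real (\<beta> i) * f (\<mu> i))"
proof -
  have "sum_list (map f (Lb n \<mu> \<beta>)) = sum_list (map (\<lambda>i. sum_list (map f (replicate (\<beta> i) (\<mu> i)))) [0..<Suc n])"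
    unfolding Lb_def by (simp add: map_concat sum_list_concat' comp_def)
  also have "\<dots> = (\<Sum>i\<le>n. real (\<beta> i) * f (\<mu> i))"
    unfolding sum_list_upt_Suc by (simp add: sum_list_replicate)
  finally show ?thesis .
qed

lemma mean_Lb:
  assumes "\<alpha> \<in> multi_idx n l"
  shows "mean (Lb n \<mu> \<alpha>) = (\<lambda>a. \<Sum>i\<le>n. (real (\<alpha> i) / real l) * \<mu> i a)"
  using assms by (auto simp: mean_def sum_list_Lb length_Lb multi_idx_def fun_eq_iff sum_divide_distrib)

lemma var_identity:
  fixes w z :: "nat \<Rightarrow> real"
  assumes L: "(\<Sum>i\<in>I. w i) = L" "L > 0" and fin: "finite I"
  shows "(\<Sum>i\<in>I. w i * (z i - (\<Sum>j\<in>I. w j * z j) / L)^2) =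
         (\<Sum>i\<in>I. \<Sum>j\<in>I. w i * w j * (z i - z j)^2) / (2 * L)"
proof -
  define S1 where "S1 = (\<Sum>j\<in>I. w j * z j)"
  define S2 where "S2 = (\<Sum>j\<in>I. w j * (z j)^2)"
  have "(\<Sum>i\<in>I. w i * (z i - S1 / L)^2) = (\<Sum>i\<in>I. w i * (z i)^2 - 2 * (S1 / L) * (w i * z i) + (S1/L)^2 * w i)"
    by (intro sum.cong) (auto simp: power2_eq_square algebra_simps)
  also have "\<dots> = S2 - 2 * (S1 / L) * S1 + (S1/L)^2 * L"
  proof -
    have "(\<Sum>i\<in>I. (S1/L)^2 * w i) = (S1/L)^2 * L" by (simp add: sum_distrib_left[symmetric] L)
    moreover have "(\<Sum>i\<in>I. 2 * (S1 / L) * (w i * z i)) = 2 * (S1 / L) * S1"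
      unfolding sum_distrib_left[symmetric] S1_def ..
    ultimately show ?thesis by (simp add: sum.distrib sum_subtractf S2_def)
  qed
  also have "\<dots> = S2 - S1^2 / L" using L by (simp add: power2_eq_square field_simps)
  finally have lhs: "(\<Sum>i\<in>I. w i * (z i - S1 / L)^2) = S2 - S1^2 / L" .
  have "(\<Sum>i\<in>I. \<Sum>j\<in>I. w i * w j * (z i - z j)^2) = (\<Sum>i\<in>I. w i * (z i)^2 * L - 2 * (w i * z i) * S1 + w i * S2)"
  proof (rule sum.cong[OF refl])
    fix i assume "i \<in> I"
    have "(\<Sum>j\<in>I. w i * w j * (z i - z j)^2) = (\<Sum>j\<in>I. w i * (z i)^2 * w j - 2 * (w i * z i) * (w j * z j) + w i * (w j * (z j)^2))"
      by (intro sum.cong) (auto simp: power2_eq_square algebra_simps)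
    also have "\<dots> = w i * (z i)^2 * L - 2 * (w i * z i) * S1 + w i * S2"
    proof -
      have a1: "(\<Sum>j\<in>I. w i * (z i)^2 * w j) = w i * (z i)^2 * L" unfolding sum_distrib_left[symmetric] L ..
      have a2: "(\<Sum>j\<in>I. 2 * (w i * z i) * (w j * z j)) = 2 * (w i * z i) * S1" unfolding sum_distrib_left[symmetric] S1_def ..
      have a3: "(\<Sum>j\<in>I. w i * (w j * (z j)^2)) = w i * S2" unfolding sum_distrib_left[symmetric] S2_def ..
      show ?thesis unfolding sum.distrib sum_subtractf a1 a2 a3 ..
    qed
    finally show "(\<Sum>j\<in>I. w i * w j * (z i - z j)^2) = w i * (z i)^2 * L - 2 * (w i * z i) * S1 + w i * S2" .
  qed
  also have "\<dots> = S2 * L - 2 * S1 * S1 + L * S2"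
  proof -
    have a1: "(\<Sum>i\<in>I. w i * (z i)^2 * L) = S2 * L" unfolding sum_distrib_right[symmetric] S2_def ..
    have a2: "(\<Sum>i\<in>I. 2 * (w i * z i) * S1) = 2 * S1 * S1"
      unfolding sum_distrib_right[symmetric] sum_distrib_left[symmetric] S1_def by simp
    have a3: "(\<Sum>i\<in>I. w i * S2) = L * S2" unfolding sum_distrib_right[symmetric] L ..
    show ?thesis unfolding sum.distrib sum_subtractf a1 a2 a3 ..
  qed
  finally have rhs: "(\<Sum>i\<in>I. \<Sum>j\<in>I. w i * w j * (z i - z j)^2) = 2 * L * S2 - 2 * S1^2"
    by (simp add: power2_eq_square algebra_simps)
  show ?thesis unfolding lhs rhs S1_def[symmetric] using L by (simp add: field_simps)
qed

lemma var_bound: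
  fixes w :: "nat \<Rightarrow> real" and \<mu> :: "nat \<Rightarrow> nat \<Rightarrow> real"
  assumes L: "(\<Sum>i\<in>I. w i) = L" "L > 0" and fin: "finite I" "finite A"
    and w0: "\<And>i. i \<in> I \<Longrightarrow> w i \<ge> 0"
    and D: "\<And>i j. i \<in> I \<Longrightarrow> j \<in> I \<Longrightarrow> (\<Sum>a\<in>A. (\<mu> i a - \<mu> j a)^2) \<le> D2"
  shows "(\<Sum>a\<in>A. \<Sum>i\<in>I. w i * (\<mu> i a - (\<Sum>j\<in>I. w j * \<mu> j a) / L)^2) \<le> L / 2 * D2"
proof -
  have "(\<Sum>a\<in>A. \<Sum>i\<in>I. w i * (\<mu> i a - (\<Sum>j\<in>I. w j * \<mu> j a) / L)^2) =
        (\<Sum>a\<in>A. (\<Sum>i\<in>I. \<Sum>j\<in>I. w i * w j * (\<mu> i a - \<mu> j a)^2) / (2 * L))"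
    by (intro sum.cong refl var_identity[OF L fin(1)])
  also have "\<dots> = (\<Sum>i\<in>I. \<Sum>j\<in>I. w i * w j * (\<Sum>a\<in>A. (\<mu> i a - \<mu> j a)^2)) / (2 * L)"
    by (simp add: sum_divide_distrib[symmetric] sum_distrib_left sum.swap[of _ A I] sum.swap[of _ A I])
  also have "\<dots> \<le> (\<Sum>i\<in>I. \<Sum>j\<in>I. w i * w j * D2) / (2 * L)"
    using L w0 D by (intro divide_right_mono sum_mono mult_left_mono) auto
  also have "\<dots> = L / 2 * D2"
    using L by (simp add: sum_distrib_right[symmetric] sum_distrib_left[symmetric] power2_eq_square field_simps)
  finally show ?thesis .
qed

lemma coord_bound:
  assumes x: "x \<in> simplex_set n V"
  shows "\<bar>x k\<bar> \<le> (\<Sum>i\<le>n. \<bar>V i k\<bar>)"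
proof -
  obtain mu where mu: "\<forall>i\<le>n. mu i \<ge> 0" "(\<Sum>i\<le>n. mu i) = 1" "x = (\<lambda>k. \<Sum>i\<le>n. mu i * V i k)"
    using x unfolding simplex_set_def by blast
  have le1: "mu i \<le> 1" if "i \<le> n" for i
    using member_le_sum[of i "{..n}" mu] mu that by auto
  have "\<bar>x k\<bar> \<le> (\<Sum>i\<le>n. \<bar>mu i * V i k\<bar>)" using mu(3) by (simp add: sum_abs)
  also have "\<dots> \<le> (\<Sum>i\<le>n. \<bar>V i k\<bar>)"
  proof (rule sum_mono)
    fix i assume "i \<in> {..n}"
    hence "\<bar>mu i\<bar> \<le> 1" using mu le1 by auto
    thus "\<bar>mu i * V i k\<bar> \<le> \<bar>V i k\<bar>" by (simp add: abs_mult mult_left_le_one_le)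
  qed
  finally show ?thesis .
qed

lemma dist_bdd: "bdd_above {dist_n n x y | x y. x \<in> simplex_set n V \<and> y \<in> simplex_set n V}"
proof -
  define b where "b k = (\<Sum>i\<le>n. \<bar>V i k\<bar>)" for k
  have "dist_n n x y \<le> sqrt (\<Sum>k<n. (2 * b k)^2)" if "x \<in> simplex_set n V" "y \<in> simplex_set n V" for x y
    unfolding dist_n_def
  proof (rule real_sqrt_le_mono, rule sum_mono)
    fix k
    have "\<bar>x k - y k\<bar> \<le> 2 * b k" using coord_bound[OF that(1), of k] coord_bound[OF that(2), of k]
      by (simp add: b_def)
    hence "\<bar>x k - y k\<bar>^2 \<le> (2 * b k)^2" by (rule power_mono) simp
    thus "(x k - y k)^2 \<le> (2 * b k)^2" by simp
  qed
  thus ?thesis unfolding bdd_above_def by blast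
qed

lemma dist_le_diam:
  assumes "x \<in> simplex_set n V" "y \<in> simplex_set n V"
  shows "dist_n n x y \<le> diam_simplex n V"
  unfolding diam_simplex_def diam_n_def
  by (rule cSup_upper[OF _ dist_bdd]) (use assms in blast)

lemma diam_nonneg: "diam_simplex n V \<ge> 0"
proof -
  have "dist_n n (V 0) (V 0) \<le> diam_simplex n V" by (rule dist_le_diam) (auto intro: vertex_in_simplex)
  moreover have "dist_n n (V 0) (V 0) = 0" by (simp add: dist_n_def)
  ultimately show ?thesis by simp
qed

lemma std_coords:
  assumes "x \<in> simplex_set n std_simplex"
  shows "\<forall>k<n. x k \<ge> 0 \<and> x k \<le> 1" "(\<Sum>k<n. x k) \<le> 1"
proof -
  obtain mu where mu: "\<forall>i\<le>n. mu i \<ge> 0" "(\<Sum>i\<le>n. mu i) = 1" "x = (\<lambda>k. \<Sum>i\<le>n. mu i * std_simplex i k)"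
    using assms unfolding simplex_set_def by blast
  have xk: "x k = mu (Suc k)" if "k < n" for k
  proof -
    have pw: "mu i * std_simplex i k = (if i = Suc k then mu i else 0)" for i
      by (cases i) (auto simp: std_simplex_def)
    have "x k = (\<Sum>i\<le>n. if i = Suc k then mu i else 0)"
      using mu(3) pw by simp
    thus ?thesis using that by (simp add: sum.delta)
  qed
  have s: "(\<Sum>k<n. x k) = (\<Sum>k<n. mu (Suc k))" using xk by simp
  have "(\<Sum>i\<le>n. mu i) = mu 0 + (\<Sum>k<n. mu (Suc k))" by (rule sum_shift1)
  hence s1: "(\<Sum>k<n. x k) \<le> 1" using mu s by auto
  show "(\<Sum>k<n. x k) \<le> 1" by (rule s1)
  show "\<forall>k<n. x k \<ge> 0 \<and> x k \<le> 1"
  proof (intro allI impI conjI)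
    fix k assume k: "k < n"
    show "x k \<ge> 0" using xk[OF k] mu(1) k by auto
    have "x k \<le> (\<Sum>k<n. x k)"
      by (rule member_le_sum) (use k xk mu(1) in auto)
    thus "x k \<le> 1" using s1 by simp
  qed
qed

definition dstd :: "nat \<Rightarrow> real" where "dstd n = (if n \<le> 1 then 1 else 2)"

lemma std_diam: "(diam_simplex n std_simplex)^2 \<le> dstd n"
proof -
  have d: "dist_n n x y \<le> sqrt (dstd n)" if "x \<in> simplex_set n std_simplex" "y \<in> simplex_set n std_simplex" for x y
    unfolding dist_n_def
  proof (rule real_sqrt_le_mono)
    note cx = std_coords[OF that(1)] and cy = std_coords[OF that(2)]
    show "(\<Sum>k<n. (x k - y k)^2) \<le> dstd n"
    proof (cases "n \<le> 1")
      case True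
      have "(x k - y k)^2 \<le> 1" if "k < n" for k
      proof -
        have "0 \<le> x k" "x k \<le> 1" "0 \<le> y k" "y k \<le> 1" using cx cy that by auto
        hence "\<bar>x k - y k\<bar> \<le> 1" by linarith
        hence "\<bar>x k - y k\<bar>^2 \<le> 1^2" by (rule power_mono) simp
        thus ?thesis by simp
      qed
      hence "(\<Sum>k<n. (x k - y k)^2) \<le> (\<Sum>k<n. 1)" by (intro sum_mono) auto
      also have "\<dots> \<le> 1" using True by simp
      finally show ?thesis using True by (simp add: dstd_def)
    next
      case False
      have "(x k - y k)^2 \<le> x k + y k" if "k < n" for k
      proof -
        have "x k * x k \<le> x k" "y k * y k \<le> y k" "x k * y k \<ge> 0"
          using cx cy that by (auto simp: mult_left_le_one_le)
        thus ?thesis by (simp add: power2_eq_square algebra_simps)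
      qed
      hence "(\<Sum>k<n. (x k - y k)^2) \<le> (\<Sum>k<n. x k + y k)" by (intro sum_mono) auto
      also have "\<dots> \<le> 2" using cx(2) cy(2) by (simp add: sum.distrib)
      finally show ?thesis using False by (simp add: dstd_def)
    qed
  qed
  have "diam_simplex n std_simplex \<le> sqrt (dstd n)"
    unfolding diam_simplex_def diam_n_def
  proof (rule cSup_least)
    show "{dist_n n x y |x y. x \<in> simplex_set n std_simplex \<and> y \<in> simplex_set n std_simplex} \<noteq> {}"
      using vertex_in_simplex[of 0 n std_simplex] by blast
  qed (use d in blast)
  hence "(diam_simplex n std_simplex)^2 \<le> (sqrt (dstd n))^2"
    by (rule power_mono) (rule diam_nonneg)
  thus ?thesis by (simp add: dstd_def)
qed

lemma subdiv_props:
  assumes Ss: "subdivision_scheme n S" and Sh: "shrinking_factor n S C"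
  shows "V \<in> subdiv_iter S N std_simplex \<Longrightarrow> nondeg_simplex n V \<and> simplex_set n V \<subseteq> simplex_set n std_simplex
          \<and> diam_simplex n V \<le> C ^ N * diam_simplex n std_simplex"
proof (induction N arbitrary: V)
  case 0 thus ?case using std_nondeg by simp
next
  case (Suc N)
  obtain U where U: "U \<in> subdiv_iter S N std_simplex" "V \<in> S U" using Suc.prems by auto
  have IH: "nondeg_simplex n U" "simplex_set n U \<subseteq> simplex_set n std_simplex"
    "diam_simplex n U \<le> C ^ N * diam_simplex n std_simplex" using Suc.IH[OF U(1)] by auto
  have ndV: "nondeg_simplex n V" using Ss IH(1) U(2) unfolding subdivision_scheme_def by blast
  have "simplex_set n V \<subseteq> simplex_set n U" using Ss IH(1) U(2) unfolding subdivision_scheme_def by blast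
  hence sV: "simplex_set n V \<subseteq> simplex_set n std_simplex" using IH(2) by blast
  have C0: "C \<ge> 0" using Sh by (simp add: shrinking_factor_def)
  have "diam_simplex n V \<le> C * diam_simplex n U" using Sh IH(1) U(2) unfolding shrinking_factor_def by blast
  also have "\<dots> \<le> C * (C ^ N * diam_simplex n std_simplex)" by (rule mult_left_mono[OF IH(3) C0])
  finally show ?case using ndV sV by simp
qed

lemma bern_nonneg: "distr n w \<Longrightarrow> bernstein n l \<beta> w \<ge> 0"
  unfolding bernstein_def distr_def
  by (intro mult_nonneg_nonneg divide_nonneg_nonneg prod_nonneg zero_le_power) auto

lemma bern_sum1:
  assumes "distr n w"
  shows "(\<Sum>\<beta>\<in>multi_idx n l. bernstein n l \<beta> w) = 1"
proof -
  have "(\<Sum>\<beta>\<in>multi_idx n l. bernstein n l \<beta> w) = Psi n (\<lambda>_. 1) (replicate l w)"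
    by (simp add: Psi_rep)
  also have "\<dots> = 1" by (rule Psi_const) (use assms in auto)
  finally show ?thesis .
qed

lemma corner_mi: "i \<le> n \<Longrightarrow> (\<lambda>k. if k = i then l else 0) \<in> multi_idx n l"
  by (auto simp: multi_idx_def sum.delta)

lemma madd3_addm: "madd3 \<gamma> (ehat i) (ehat j) = addm (addm \<gamma> i) j"
  by (auto simp: madd3_def addm_def fun_eq_iff)

definition hset :: "nat \<Rightarrow> nat \<Rightarrow> (pt \<Rightarrow> real) \<Rightarrow> real set" where
  "hset n l p = {\<bar>bcoef n p l std_simplex (madd3 \<gamma> (ehat i) (ehat (prev_idx n j)))
       + bcoef n p l std_simplex (madd3 \<gamma> (ehat (prev_idx n i)) (ehat j))
       - bcoef n p l std_simplex (madd3 \<gamma> (ehat (prev_idx n i)) (ehat (prev_idx n j)))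
       - bcoef n p l std_simplex (madd3 \<gamma> (ehat i) (ehat j))\<bar>
      | \<gamma> i j. \<gamma> \<in> multi_idx n (l - 2) \<and> i < j \<and> j \<le> n}"

lemma hset_finite: "finite (hset n l p)"
proof -
  have "hset n l p \<subseteq> (\<lambda>(\<gamma>, i, j). \<bar>bcoef n p l std_simplex (madd3 \<gamma> (ehat i) (ehat (prev_idx n j)))
       + bcoef n p l std_simplex (madd3 \<gamma> (ehat (prev_idx n i)) (ehat j))
       - bcoef n p l std_simplex (madd3 \<gamma> (ehat (prev_idx n i)) (ehat (prev_idx n j)))
       - bcoef n p l std_simplex (madd3 \<gamma> (ehat i) (ehat j))\<bar>) ` (multi_idx n (l - 2) \<times> {..n} \<times> {..n})"
  proof (rule subsetI)
    fix v assume "v \<in> hset n l p"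
    then obtain \<gamma> i j where g: "\<gamma> \<in> multi_idx n (l - 2)" "i < j" "j \<le> n"
      and v: "v = \<bar>bcoef n p l std_simplex (madd3 \<gamma> (ehat i) (ehat (prev_idx n j)))
       + bcoef n p l std_simplex (madd3 \<gamma> (ehat (prev_idx n i)) (ehat j))
       - bcoef n p l std_simplex (madd3 \<gamma> (ehat (prev_idx n i)) (ehat (prev_idx n j)))
       - bcoef n p l std_simplex (madd3 \<gamma> (ehat i) (ehat j))\<bar>"
      unfolding hset_def by blast
    show "v \<in> (\<lambda>(\<gamma>, i, j). \<bar>bcoef n p l std_simplex (madd3 \<gamma> (ehat i) (ehat (prev_idx n j)))
       + bcoef n p l std_simplex (madd3 \<gamma> (ehat (prev_idx n i)) (ehat j))
       - bcoef n p l std_simplex (madd3 \<gamma> (ehat (prev_idx n i)) (ehat (prev_idx n j)))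
       - bcoef n p l std_simplex (madd3 \<gamma> (ehat i) (ehat j))\<bar>) ` (multi_idx n (l - 2) \<times> {..n} \<times> {..n})"
      by (rule image_eqI[of _ _ "(\<gamma>, i, j)"]) (use g v in auto)
  qed
  thus ?thesis by (rule finite_subset) (auto intro: multi_idx_finite)
qed

lemma hess_norm_alt: "hess_norm n l p = Max (insert 0 (hset n l p))"
  by (simp add: hess_norm_def hset_def)

lemma hess_nonneg: "hess_norm n l p \<ge> 0"
  unfolding hess_norm_alt by (rule Max_ge) (auto simp: hset_finite)

lemma hess_elem:
  assumes "\<gamma> \<in> multi_idx n (l - 2)" "i < j" "j \<le> n"
  shows "\<bar>bcoef n p l std_simplex (addm (addm \<gamma> i) (prev_idx n j))
       + bcoef n p l std_simplex (addm (addm \<gamma> (prev_idx n i)) j)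
       - bcoef n p l std_simplex (addm (addm \<gamma> (prev_idx n i)) (prev_idx n j))
       - bcoef n p l std_simplex (addm (addm \<gamma> i) j)\<bar> \<le> hess_norm n l p"
proof -
  have fin: "finite (insert 0 (hset n l p))" by (simp add: hset_finite)
  show ?thesis
    unfolding hess_norm_alt madd3_addm[symmetric]
    by (rule Max_ge[OF fin], rule insertI2, unfold hset_def) (use assms in blast)
qed

lemma poly_diff: "is_poly n l p \<Longrightarrow> is_poly n l q \<Longrightarrow> is_poly n l (\<lambda>x. p x - u * q x)"
  unfolding is_poly_def
proof (elim exE)
  fix a b assume a: "\<forall>x. in_Rn n x \<longrightarrow> p x = (\<Sum>\<alpha>\<in>{\<alpha>. (\<forall>i\<ge>n. \<alpha> i = 0) \<and> (\<Sum>i<n. \<alpha> i) \<le> l}. a \<alpha> * (\<Prod>i<n. x i ^ \<alpha> i))"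
    and b: "\<forall>x. in_Rn n x \<longrightarrow> q x = (\<Sum>\<alpha>\<in>{\<alpha>. (\<forall>i\<ge>n. \<alpha> i = 0) \<and> (\<Sum>i<n. \<alpha> i) \<le> l}. b \<alpha> * (\<Prod>i<n. x i ^ \<alpha> i))"
  show "\<exists>c. \<forall>x. in_Rn n x \<longrightarrow> p x - u * q x = (\<Sum>\<alpha>\<in>{\<alpha>. (\<forall>i\<ge>n. \<alpha> i = 0) \<and> (\<Sum>i<n. \<alpha> i) \<le> l}. c \<alpha> * (\<Prod>i<n. x i ^ \<alpha> i))"
    by (rule exI[of _ "\<lambda>\<alpha>. a \<alpha> - u * b \<alpha>"])
       (use a b in \<open>simp add: left_diff_distrib sum_subtractf sum_distrib_left mult.assoc\<close>)
qed

lemma L_const: "36 * dstd n * (real n^2 * (real n + 1)) \<le> real n ^ 2 * real (n + 1) * real (n + 2) ^ 2 * real (n + 3)"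
proof -
  consider "n = 0" | "n = 1" | "n \<ge> 2" by linarith
  thus ?thesis
  proof cases
    case 3
    have a: "(80::real) \<le> real (n + 2) ^ 2 * real (n + 3)"
    proof -
      have "(4::real) ^ 2 \<le> real (n+2)^2" using 3 by (intro power_mono) auto
      hence "(16::real) \<le> real (n+2)^2" by simp
      moreover have "(5::real) \<le> real (n+3)" using 3 by simp
      ultimately have "16 * 5 \<le> real (n+2)^2 * real (n+3)" by (intro mult_mono) auto
      thus ?thesis by simp
    qed
    have b: "0 \<le> real n^2 * (real n + 1)" by simp
    have "36 * dstd n * (real n^2 * (real n + 1)) = 72 * (real n^2 * (real n + 1))" using 3 by (simp add: dstd_def)
    also have "\<dots> \<le> (real (n + 2) ^ 2 * real (n + 3)) * (real n^2 * (real n + 1))"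
      using a b by (intro mult_right_mono) auto
    finally show ?thesis by (simp add: algebra_simps)
  qed (simp_all add: dstd_def)
qed

lemma L_num:
  fixes C w f :: real
  assumes "1 / C ^ N > sqrt (2 * w) / sqrt f" "f > 0" "w \<ge> 0" "C > 0"
  shows "2 * w * C ^ (2 * N) < f"
proof -
  have cn: "C ^ N > 0" using assms by simp
  have sf: "sqrt f > 0" using assms by simp
  have "sqrt (2 * w) < sqrt f / C ^ N" using assms(1) cn sf by (simp add: field_simps)
  hence "sqrt (2 * w) * C ^ N < sqrt f" using cn by (simp add: field_simps)
  moreover have "0 \<le> sqrt (2 * w) * C ^ N" using assms cn by simp
  ultimately have "(sqrt (2 * w) * C ^ N)^2 < (sqrt f)^2" by (rule power_strict_mono) simp
  thus ?thesis using assms by (simp add: power_mult_distrib power_mult[symmetric] mult.commute)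
qed

lemma ga: "a*b*c*(d*e)/8 = a*b*d*(36*e*c)/(288::real)" by (simp add: field_simps)
lemma gb: "m \<noteq> 0 \<Longrightarrow> h*l*c*k/288 = 2 * (l * k / (576*m) * h) * c * (m::real)" by (simp add: field_simps)
lemma gc: "m > 0 \<Longrightarrow> e \<le> x * m \<Longrightarrow> e / m \<le> (x::real)" by (simp add: field_simps)

theorem proposition5p8:
  fixes n l N :: nat and p q :: "pt \<Rightarrow> real" and S :: "smplx \<Rightarrow> smplx set"
    and C fmin :: real
  assumes poly_p: "is_poly n l p" and poly_q: "is_poly n l q"
    and fmin_def: "fmin = (INF x\<in>simplex_set n std_simplex. p x / q x)"
    and fmin_pos: "fmin > 0"
    and q_pos_std: "\<forall>\<alpha>\<in>multi_idx n l. bcoef n q l std_simplex \<alpha> > 0"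
    and q_pos_sub: "\<forall>V\<in>subdiv_iter S N std_simplex. \<forall>\<alpha>\<in>multi_idx n l. bcoef n q l V \<alpha> > 0"
    and S_scheme: "subdivision_scheme n S"
    and S_shrink: "shrinking_factor n S C"
    and N_big: "1 / C ^ N > sqrt (2 * omega' n l p q) / sqrt fmin"
  shows "\<forall>V\<in>subdiv_iter S N std_simplex.
           (\<forall>\<alpha>\<in>multi_idx n l. bcoef_rat n p q l V \<alpha> \<ge> 0) \<and>
           (\<forall>i\<le>n. bcoef_rat n p q l V (\<lambda>k. if k = i then l else 0) > 0)"
proof -
  define cp where "cp = bcoef n p l std_simplex"
  define cq where "cq = bcoef n q l std_simplex"
  have cp_rep: "\<forall>x. in_Rn n x \<longrightarrow> p x = (\<Sum>\<beta>\<in>multi_idx n l. cp \<beta> * bernstein n l \<beta> (bary n std_simplex x))"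
    unfolding cp_def by (rule bcoef_rep(2)[OF std_nondeg rep_poly[OF std_nondeg poly_p]])
  have cq_rep: "\<forall>x. in_Rn n x \<longrightarrow> q x = (\<Sum>\<beta>\<in>multi_idx n l. cq \<beta> * bernstein n l \<beta> (bary n std_simplex x))"
    unfolding cq_def by (rule bcoef_rep(2)[OF std_nondeg rep_poly[OF std_nondeg poly_q]])
  have mi_fin: "finite (multi_idx n l)" by (rule multi_idx_finite)
  have mi_ne: "multi_idx n l \<noteq> {}" using corner_mi[of 0 n l] by auto
  define mq where "mq = Min (cq ` multi_idx n l)"
  have mq_le: "mq \<le> cq \<beta>" if "\<beta> \<in> multi_idx n l" for \<beta>
    unfolding mq_def using mi_fin that by (intro Min_le) auto
  have mq_pos: "mq > 0"
  proof -
    have "mq \<in> cq ` multi_idx n l" unfolding mq_def using mi_fin mi_ne by (intro Min_in) auto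
    thus ?thesis using q_pos_std by (auto simp: cq_def)
  qed
  have cq_pos: "cq \<beta> > 0" if "\<beta> \<in> multi_idx n l" for \<beta> using q_pos_std that by (simp add: cq_def)
  define bf where "bf = bcoef_rat n p q l std_simplex ` multi_idx n l"
  have bf_fin: "finite bf" "bf \<noteq> {}" using mi_fin mi_ne by (auto simp: bf_def)
  define lo where "lo = Min bf"
  define hi where "hi = Max bf"
  have ratio: "lo \<le> cp \<beta> / cq \<beta>" "cp \<beta> / cq \<beta> \<le> hi" if "\<beta> \<in> multi_idx n l" for \<beta>
    using bf_fin that unfolding lo_def hi_def bf_def bcoef_rat_def cp_def cq_def
    by (auto intro!: Min_le Max_ge)
  define \<zeta> where "\<zeta> = max \<bar>lo\<bar> \<bar>hi\<bar>"
  define Hp where "Hp = hess_norm n l p"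
  define Hq where "Hq = hess_norm n l q"
  define H where "H = Hp + \<zeta> * Hq"
  have Hp0: "Hp \<ge> 0" and Hq0: "Hq \<ge> 0" unfolding Hp_def Hq_def by (rule hess_nonneg)+
  have z0: "\<zeta> \<ge> 0" by (simp add: \<zeta>_def)
  have H0: "H \<ge> 0" using Hp0 Hq0 z0 by (simp add: H_def)
  have om: "omega' n l p q = real l * (real n ^ 2 * real (n + 1) * real (n + 2) ^ 2 * real (n + 3)) / (576 * mq) * H"
    unfolding omega'_def Let_def H_def Hp_def Hq_def \<zeta>_def lo_def hi_def bf_def mq_def cq_def ..
  have om0: "omega' n l p q \<ge> 0" unfolding om using H0 mq_pos by simp
  have onD: "in_Rn n x \<and> q x \<ge> mq \<and> lo \<le> p x / q x \<and> p x / q x \<le> hi"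
    if x: "x \<in> simplex_set n std_simplex" for x
  proof -
    have xr: "in_Rn n x" and dw: "distr n (bary n std_simplex x)"
      using simplex_set_props[OF std_nondeg x] by auto
    define w where "w = bary n std_simplex x"
    have B0: "bernstein n l \<beta> w \<ge> 0" for \<beta> unfolding w_def by (rule bern_nonneg[OF dw])
    have B1: "(\<Sum>\<beta>\<in>multi_idx n l. bernstein n l \<beta> w) = 1" unfolding w_def by (rule bern_sum1[OF dw])
    have qx: "q x = (\<Sum>\<beta>\<in>multi_idx n l. cq \<beta> * bernstein n l \<beta> w)" using cq_rep xr by (simp add: w_def)
    have px: "p x = (\<Sum>\<beta>\<in>multi_idx n l. cp \<beta> * bernstein n l \<beta> w)" using cp_rep xr by (simp add: w_def)
    have "q x \<ge> (\<Sum>\<beta>\<in>multi_idx n l. mq * bernstein n l \<beta> w)"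
      unfolding qx by (intro sum_mono mult_right_mono mq_le B0)
    hence qm: "q x \<ge> mq" using B1 by (simp add: sum_distrib_left[symmetric])
    have qpos: "q x > 0" using qm mq_pos by simp
    have "p x - lo * q x = (\<Sum>\<beta>\<in>multi_idx n l. cq \<beta> * (cp \<beta> / cq \<beta> - lo) * bernstein n l \<beta> w)"
      unfolding px qx sum_distrib_left sum_subtractf[symmetric]
    proof (rule sum.cong[OF refl])
      fix \<beta> assume "\<beta> \<in> multi_idx n l"
      hence "cq \<beta> \<noteq> 0" using cq_pos by fastforce
      thus "cp \<beta> * bernstein n l \<beta> w - lo * (cq \<beta> * bernstein n l \<beta> w) = cq \<beta> * (cp \<beta> / cq \<beta> - lo) * bernstein n l \<beta> w"
        by (simp add: field_simps)
    qed
    also have "\<dots> \<ge> 0"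
      using ratio cq_pos B0 by (intro sum_nonneg mult_nonneg_nonneg) (auto simp: less_imp_le)
    finally have "lo * q x \<le> p x" by simp
    hence lo_le: "lo \<le> p x / q x" using qpos by (simp add: field_simps)
    have "hi * q x - p x = (\<Sum>\<beta>\<in>multi_idx n l. cq \<beta> * (hi - cp \<beta> / cq \<beta>) * bernstein n l \<beta> w)"
      unfolding px qx sum_distrib_left sum_subtractf[symmetric]
    proof (rule sum.cong[OF refl])
      fix \<beta> assume "\<beta> \<in> multi_idx n l"
      hence "cq \<beta> \<noteq> 0" using cq_pos by fastforce
      thus "hi * (cq \<beta> * bernstein n l \<beta> w) - cp \<beta> * bernstein n l \<beta> w = cq \<beta> * (hi - cp \<beta> / cq \<beta>) * bernstein n l \<beta> w"
        by (simp add: field_simps)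
    qed
    also have "\<dots> \<ge> 0"
      using ratio cq_pos B0 by (intro sum_nonneg mult_nonneg_nonneg) (auto simp: less_imp_le)
    finally have "p x \<le> hi * q x" by simp
    hence "p x / q x \<le> hi" using qpos by (simp add: field_simps)
    thus ?thesis using xr qm lo_le by simp
  qed
  have fmin_le: "fmin \<le> p x / q x" if "x \<in> simplex_set n std_simplex" for x
  proof -
    have "bdd_below ((\<lambda>x. p x / q x) ` simplex_set n std_simplex)"
      using onD unfolding bdd_below_def by blast
    thus ?thesis unfolding fmin_def using that by (rule cINF_lower)
  qed
  have C0: "C > 0" using S_shrink by (simp add: shrinking_factor_def)
  have num: "2 * omega' n l p q * C ^ (2 * N) < fmin" by (rule L_num[OF N_big fmin_pos om0 C0])
  have key: "bcoef_rat n p q l V \<alpha> > 0" if V: "V \<in> subdiv_iter S N std_simplex" and a: "\<alpha> \<in> multi_idx n l" for V \<alpha>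
  proof -
    have pr: "nondeg_simplex n V" "simplex_set n V \<subseteq> simplex_set n std_simplex"
      "diam_simplex n V \<le> C ^ N * diam_simplex n std_simplex"
      using subdiv_props[OF S_scheme S_shrink V] by auto
    have ndV: "nondeg_simplex n V" by (rule pr(1))
    define \<mu> where "\<mu> = (\<lambda>i. bary n std_simplex (V i))"
    have vD: "V i \<in> simplex_set n std_simplex" if "i \<le> n" for i using pr(2) vertex_in_simplex[OF that] by blast
    have dmu: "distr n (\<mu> i)" if "i \<le> n" for i using simplex_set_props(2)[OF std_nondeg vD[OF that]] by (simp add: \<mu>_def)
    have vR: "in_Rn n (V i)" if "i \<le> n" for i by (rule simplex_set_props(1)[OF std_nondeg vD[OF that]])
    define L where "L = Lb n \<mu> \<alpha>"
    have lenL: "length L = l" using a by (simp add: L_def length_Lb multi_idx_def)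
    have dL: "\<forall>\<pi>\<in>set L. distr n \<pi>" using set_Lb[of n \<mu> \<alpha>] dmu by (auto simp: L_def)
    have Fp: "bcoef n p l V \<alpha> = Psi n cp L"
      using blossom[OF ndV poly_p] a by (simp add: L_def \<mu>_def cp_def)
    have Fq: "bcoef n q l V \<alpha> = Psi n cq L"
      using blossom[OF ndV poly_q] a by (simp add: L_def \<mu>_def cq_def)
    define y where "y = (if l = 0 then V 0 else (\<lambda>k. \<Sum>i\<le>n. (real (\<alpha> i) / real l) * V i k))"
    have yV: "y \<in> simplex_set n V"
    proof (cases "l = 0")
      case True thus ?thesis using vertex_in_simplex[of 0 n V] by (simp add: y_def)
    next
      case False
      have "(\<Sum>i\<le>n. real (\<alpha> i) / real l) = 1"
        using a False by (simp add: multi_idx_def sum_divide_distrib[symmetric] flip: of_nat_sum)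
      thus ?thesis using False unfolding simplex_set_def y_def
        by (intro CollectI exI[of _ "\<lambda>i. real (\<alpha> i) / real l"]) auto
    qed
    have yD: "y \<in> simplex_set n std_simplex" using yV pr(2) by blast
    define \<phi> where "\<phi> = p y / q y"
    have yy: "in_Rn n y" "q y \<ge> mq" "lo \<le> \<phi>" "\<phi> \<le> hi" using onD[OF yD] by (auto simp: \<phi>_def)
    have qy: "q y > 0" using yy mq_pos by simp
    have fphi: "fmin \<le> \<phi>" unfolding \<phi>_def by (rule fmin_le[OF yD])
    have phiz: "\<bar>\<phi>\<bar> \<le> \<zeta>" using yy by (simp add: \<zeta>_def)
    define cg where "cg \<beta> = cp \<beta> - \<phi> * cq \<beta>" for \<beta>
    have PsiL: "Psi n cg L = Psi n cp L - \<phi> * Psi n cq L"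
      unfolding cg_def using Psi_lin[of n 1 cp "-\<phi>" cq L] by simp
    have Psi0: "Psi n cg (replicate l (mean L)) = 0"
    proof -
      have "Psi n cg (replicate l (mean L)) = Psi n cg (replicate l (bary n std_simplex y))"
      proof (cases "l = 0")
        case True thus ?thesis by simp
      next
        case False
        have "mean L = (\<lambda>a. \<Sum>i\<le>n. (real (\<alpha> i) / real l) * \<mu> i a)" unfolding L_def by (rule mean_Lb[OF a])
        also have "\<dots> = bary n std_simplex y"
        proof -
          have "(\<Sum>i\<le>n. real (\<alpha> i) / real l) = 1"
            using a False by (simp add: multi_idx_def sum_divide_distrib[symmetric] flip: of_nat_sum)
          hence bc: "bary n std_simplex (\<lambda>k. \<Sum>i\<le>n. (real (\<alpha> i) / real l) * V i k) =
              (\<lambda>a. \<Sum>i\<le>n. (real (\<alpha> i) / real l) * bary n std_simplex (V i) a)"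
            by (intro bary_comb[OF std_nondeg vR]) auto
          show ?thesis unfolding y_def \<mu>_def using False bc by simp
        qed
        finally show ?thesis by simp
      qed
      also have "\<dots> = (\<Sum>\<beta>\<in>multi_idx n l. cg \<beta> * bernstein n l \<beta> (bary n std_simplex y))"
        by (rule Psi_rep)
      also have "\<dots> = p y - \<phi> * q y"
        using cp_rep cq_rep yy(1) by (simp add: cg_def left_diff_distrib sum_subtractf sum_distrib_left mult.assoc)
      also have "\<dots> = 0" using qy by (simp add: \<phi>_def)
      finally show ?thesis .
    qed
    define K where "K = H * (real n ^ 2 * (real n + 1) / 2)"
    have hbg: "\<bar>\<Sum>a\<le>n. \<Sum>b\<le>n. d a * d b * cg (addm (addm \<gamma> a) b)\<bar> \<le> K * qf n d"
      if g: "\<forall>i>n. \<gamma> i = 0" "(\<Sum>i\<le>n. \<gamma> i) + 2 = l" and d: "(\<Sum>a\<le>n. d a) = 0" for \<gamma> d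
    proof -
      have gm: "\<gamma> \<in> multi_idx n (l - 2)" using g by (auto simp: multi_idx_def)
      show ?thesis unfolding K_def
      proof (rule hess_bound[OF _ d])
        fix a b show "cg (addm (addm \<gamma> a) b) = cg (addm (addm \<gamma> b) a)" by (simp add: addm_comm)
      next
        fix i j assume ij: "i < j" "j \<le> n"
        let ?E = "\<lambda>c. c (addm (addm \<gamma> i) (prev_idx n j)) + c (addm (addm \<gamma> (prev_idx n i)) j)
             - c (addm (addm \<gamma> (prev_idx n i)) (prev_idx n j)) - c (addm (addm \<gamma> i) j)"
        have "?E cg = ?E cp - \<phi> * ?E cq" by (simp add: cg_def algebra_simps)
        hence "\<bar>?E cg\<bar> \<le> \<bar>?E cp\<bar> + \<bar>\<phi>\<bar> * \<bar>?E cq\<bar>" by (simp add: abs_mult[symmetric] abs_triangle_ineq4)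
        also have "\<dots> \<le> Hp + \<zeta> * Hq"
        proof (rule add_mono)
          show "\<bar>?E cp\<bar> \<le> Hp" unfolding Hp_def cp_def by (rule hess_elem[OF gm ij])
          have "\<bar>?E cq\<bar> \<le> Hq" unfolding Hq_def cq_def by (rule hess_elem[OF gm ij])
          thus "\<bar>\<phi>\<bar> * \<bar>?E cq\<bar> \<le> \<zeta> * Hq" using phiz Hq0 by (intro mult_mono) auto
        qed
        finally show "\<bar>?E cg\<bar> \<le> H" by (simp add: H_def)
      qed
    qed
    have cv1: "cvx n K cg l"
      unfolding cvx_def
    proof (intro allI impI)
      fix \<gamma> :: midx and d :: "nat \<Rightarrow> real"
      assume "\<forall>i>n. \<gamma> i = 0" "(\<Sum>i\<le>n. \<gamma> i) + 2 = l" "(\<Sum>a\<le>n. d a) = 0"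
      from abs_le_D2[OF hbg[OF this]]
      show "- K * qf n d \<le> (\<Sum>a\<le>n. \<Sum>b\<le>n. d a * d b * cg (addm (addm \<gamma> a) b))" by linarith
    qed
    have cv2: "cvx n K (\<lambda>\<beta>. - cg \<beta>) l"
      unfolding cvx_def
    proof (intro allI impI)
      fix \<gamma> :: midx and d :: "nat \<Rightarrow> real"
      assume "\<forall>i>n. \<gamma> i = 0" "(\<Sum>i\<le>n. \<gamma> i) + 2 = l" "(\<Sum>a\<le>n. d a) = 0"
      from abs_le_D1[OF hbg[OF this]]
      have "(\<Sum>a\<le>n. \<Sum>b\<le>n. d a * d b * cg (addm (addm \<gamma> a) b)) \<le> K * qf n d" .
      moreover have "(\<Sum>a\<le>n. \<Sum>b\<le>n. d a * d b * - cg (addm (addm \<gamma> a) b)) = - (\<Sum>a\<le>n. \<Sum>b\<le>n. d a * d b * cg (addm (addm \<gamma> a) b))"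
        by (simp add: sum_negf[symmetric])
      ultimately show "- K * qf n d \<le> (\<Sum>a\<le>n. \<Sum>b\<le>n. d a * d b * - cg (addm (addm \<gamma> a) b))" by linarith
    qed
    have h1: "Psi n cg L \<le> Psi n cg (replicate l (mean L)) + K / 2 * pen n L"
      by (rule hoeff[OF lenL dL cv1])
    have h2: "Psi n (\<lambda>\<beta>. - cg \<beta>) L \<le> Psi n (\<lambda>\<beta>. - cg \<beta>) (replicate l (mean L)) + K / 2 * pen n L"
      by (rule hoeff[OF lenL dL cv2])
    have errb: "\<bar>Psi n cg L\<bar> \<le> K / 2 * pen n L"
    proof -
      have "Psi n (\<lambda>\<beta>. - cg \<beta>) L = - Psi n cg L" by (rule Psi_neg)
      moreover have "Psi n (\<lambda>\<beta>. - cg \<beta>) (replicate l (mean L)) = - Psi n cg (replicate l (mean L))" by (rule Psi_neg)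
      ultimately show ?thesis using h1 h2 Psi0 by (intro abs_leI) linarith+
    qed
    define D where "D = diam_simplex n V"
    have penb: "pen n L \<le> real l / 2 * D ^ 2"
    proof (cases "l = 0")
      case True
      hence "L = []" using lenL by simp
      thus ?thesis by (simp add: pen_def)
    next
      case False
      have "pen n L = (\<Sum>a\<in>{1..n}. \<Sum>i\<le>n. real (\<alpha> i) * (\<mu> i a - (\<Sum>j\<le>n. real (\<alpha> j) * \<mu> j a) / real l)^2)"
        unfolding pen_coord
      proof (rule sum.cong[OF refl])
        fix a
        have "mean L a = (\<Sum>j\<le>n. real (\<alpha> j) * \<mu> j a) / real l"
          unfolding L_def mean_Lb[OF a] by (simp add: sum_divide_distrib)
        thus "sum_list (map (\<lambda>\<pi>. (\<pi> a - mean L a)^2) L) = (\<Sum>i\<le>n. real (\<alpha> i) * (\<mu> i a - (\<Sum>j\<le>n. real (\<alpha> j) * \<mu> j a) / real l)^2)"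
          unfolding L_def sum_list_Lb by simp
      qed
      also have "\<dots> \<le> real l / 2 * D ^ 2"
      proof (rule var_bound)
        show "(\<Sum>i\<le>n. real (\<alpha> i)) = real l" using a by (simp add: multi_idx_def flip: of_nat_sum)
        show "real l > 0" using False by simp
        fix i j assume ij: "i \<in> {..n}" "j \<in> {..n}"
        have mi: "\<mu> i a = V i (a - 1)" "\<mu> j a = V j (a - 1)" if "a \<in> {1..n}" for a
          using that ij bary_std[OF vR] by (auto simp: \<mu>_def stdbary_def)
        have "(\<Sum>a\<in>{1..n}. (\<mu> i a - \<mu> j a)^2) = (\<Sum>a\<in>{1..n}. (V i (a - 1) - V j (a - 1))^2)"
          using mi by (intro sum.cong) auto
        also have "\<dots> = (\<Sum>k<n. (V i k - V j k)^2)"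
          by (rule sum.reindex_bij_witness[where i = "\<lambda>k. k + 1" and j = "\<lambda>a. a - 1"]) auto
        also have "\<dots> = (dist_n n (V i) (V j))^2" by (simp add: dist_n_def sum_nonneg)
        also have "\<dots> \<le> D^2"
          unfolding D_def
          by (rule power_mono[OF dist_le_diam]) (use ij in \<open>auto intro!: vertex_in_simplex sum_nonneg simp: dist_n_def\<close>)
        finally show "(\<Sum>a\<in>{1..n}. (\<mu> i a - \<mu> j a)^2) \<le> D^2" .
      qed auto
      finally show ?thesis .
    qed
    define E where "E = K / 2 * (real l / 2 * D ^ 2)"
    have K0: "K \<ge> 0" using H0 by (simp add: K_def)
    have err: "\<bar>Psi n cg L\<bar> \<le> E"
    proof -
      have "K / 2 * pen n L \<le> K / 2 * (real l / 2 * D ^ 2)" by (rule mult_left_mono[OF penb]) (use K0 in simp)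
      thus ?thesis using errb unfolding E_def by linarith
    qed
    have Fq_ge: "Psi n cq L \<ge> mq"
    proof -
      have "Psi n (\<lambda>_. mq) L \<le> Psi n cq L"
        by (rule Psi_mono[OF dL]) (use mq_le lenL in auto)
      thus ?thesis using Psi_const[OF dL] by simp
    qed
    have Fq_pos: "Psi n cq L > 0" using Fq_ge mq_pos by simp
    have E0: "E \<ge> 0" using K0 by (simp add: E_def)
    have D0: "D \<ge> 0" unfolding D_def by (rule diam_nonneg)
    have DD: "D ^ 2 \<le> C ^ (2 * N) * dstd n"
    proof -
      have "D ^ 2 \<le> (C ^ N * diam_simplex n std_simplex) ^ 2"
        using pr(3) D0 by (intro power_mono) (auto simp: D_def)
      also have "\<dots> = C ^ (2 * N) * (diam_simplex n std_simplex) ^ 2"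
        by (simp add: power_mult_distrib power_mult[symmetric] mult.commute)
      also have "\<dots> \<le> C ^ (2 * N) * dstd n" using std_diam C0 by (intro mult_left_mono) auto
      finally show ?thesis .
    qed
    have Emq: "E / mq \<le> 2 * omega' n l p q * C ^ (2 * N)"
    proof -
      have "E = H * real l * (real n ^ 2 * (real n + 1)) * D ^ 2 / 8" by (simp add: E_def K_def)
      also have "\<dots> \<le> H * real l * (real n ^ 2 * (real n + 1)) * (C ^ (2 * N) * dstd n) / 8"
        using DD H0 by (intro divide_right_mono mult_left_mono) auto
      also have "\<dots> = H * real l * C ^ (2 * N) * (36 * dstd n * (real n ^ 2 * (real n + 1))) / 288"
        by (rule ga)
      also have "\<dots> \<le> H * real l * C ^ (2 * N) * (real n ^ 2 * real (n + 1) * real (n + 2) ^ 2 * real (n + 3)) / 288"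
        using H0 C0 by (intro divide_right_mono mult_left_mono L_const) auto
      also have "\<dots> = 2 * omega' n l p q * C ^ (2 * N) * mq"
        unfolding om by (rule gb) (use mq_pos in simp)
      finally show ?thesis by (rule gc[OF mq_pos])
    qed
    have "bcoef_rat n p q l V \<alpha> = Psi n cp L / Psi n cq L" by (simp add: bcoef_rat_def Fp Fq)
    also have "\<dots> = \<phi> + Psi n cg L / Psi n cq L"
      unfolding PsiL using Fq_pos by (simp add: field_simps)
    also have "\<dots> \<ge> \<phi> - E / mq"
    proof -
      have "- (Psi n cg L / Psi n cq L) = (- Psi n cg L) / Psi n cq L" by simp
      also have "\<dots> \<le> \<bar>Psi n cg L\<bar> / Psi n cq L"
        by (rule divide_right_mono) (use Fq_pos in auto)
      also have "\<dots> \<le> E / Psi n cq L" using err Fq_pos by (simp add: divide_right_mono)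
      also have "\<dots> \<le> E / mq" using E0 Fq_ge mq_pos by (simp add: frac_le)
      finally show ?thesis by simp
    qed
    finally have "bcoef_rat n p q l V \<alpha> \<ge> \<phi> - E / mq" .
    thus ?thesis using Emq num fphi by linarith
  qed
  show ?thesis
  proof (intro ballI conjI allI impI)
    fix V \<alpha> assume "V \<in> subdiv_iter S N std_simplex" "\<alpha> \<in> multi_idx n l"
    thus "bcoef_rat n p q l V \<alpha> \<ge> 0" using key less_imp_le by blast
  next
    fix V i assume "V \<in> subdiv_iter S N std_simplex" "i \<le> n"
    thus "bcoef_rat n p q l V (\<lambda>k. if k = i then l else 0) > 0" using key corner_mi by blast
  qed
qed

end
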